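(* Let $f\colon[a,b]\to\mathbb{R}$ be Laplace integrable on $[a,b]$ and let $g\colon[a,b]\to\mathbb{R}$ be of bounded variation. Put $F(x)=\int_a^xf$ and $G(x)=\int_a^xg$ for $x\in[a,b]$. Then $fG$ is Laplace integrable on $[a,b]$ and \[\int_a^bfG=F(b)G(b)-(\mathsf{P})\int_a^bFg,\] where $(\mathsf{P})\int_a^b$ denotes the Perron integral.
   Context: Laplace integral on $[a,b]$: with lower/upper Laplace derivates $\underline{LD}_1F(x)$, $\overline{LD}_1F(x)$ being the minimum of the $\liminf$'s, resp. maximum of the $\limsup$'s, as $s\to\infty$ of $s^2\int_0^\delta e^{-st}[F(x+t)-F(x)]dt$ and $(-s^2)\int_0^\delta e^{-st}[F(x-t)-F(x)]dt$ (one-sided at endpoints), a major function of $f$ is a continuous $U$ with $\underline{LD}_1U\geqslant f$, $\underline{LD}_1U>-\infty$ everywhere on $[a,b]$, a minor function a continuous $V$ with $\overline{LD}_1V\leqslant f$, $\overline{LD}_1V<\infty$ everywhere, and $f$ is Laplace integrable if $\sup_V(V(b)-V(a))=\inf_U(U(b)-U(a))$ is finite, this value being $\int_a^bf$. *)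

theory Defs
  imports "HOL-Analysis.Analysis"
begin

definition lap_right :: "(real \<Rightarrow> real) \<Rightarrow> real \<Rightarrow> real \<Rightarrow> real \<Rightarrow> real" where
  "lap_right F b x s = s^2 * integral {0..b - x} (\<lambda>t. exp (- s * t) * (F (x + t) - F x))"

definition lap_left :: "(real \<Rightarrow> real) \<Rightarrow> real \<Rightarrow> real \<Rightarrow> real \<Rightarrow> real" where
  "lap_left F a x s = - (s^2) * integral {0..x - a} (\<lambda>t. exp (- s * t) * (F (x - t) - F x))"

definition lower_LD :: "(real \<Rightarrow> real) \<Rightarrow> real \<Rightarrow> real \<Rightarrow> real \<Rightarrow> ereal" where
  "lower_LD F a b x =
     (if x = a then Liminf at_top (\<lambda>s. ereal (lap_right F b x s))
      else if x = b then Liminf at_top (\<lambda>s. ereal (lap_left F a x s))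
      else min (Liminf at_top (\<lambda>s. ereal (lap_right F b x s)))
               (Liminf at_top (\<lambda>s. ereal (lap_left F a x s))))"

definition upper_LD :: "(real \<Rightarrow> real) \<Rightarrow> real \<Rightarrow> real \<Rightarrow> real \<Rightarrow> ereal" where
  "upper_LD F a b x =
     (if x = a then Limsup at_top (\<lambda>s. ereal (lap_right F b x s))
      else if x = b then Limsup at_top (\<lambda>s. ereal (lap_left F a x s))
      else max (Limsup at_top (\<lambda>s. ereal (lap_right F b x s)))
               (Limsup at_top (\<lambda>s. ereal (lap_left F a x s))))"

definition laplace_major :: "(real \<Rightarrow> real) \<Rightarrow> real \<Rightarrow> real \<Rightarrow> (real \<Rightarrow> real) \<Rightarrow> bool" where
  "laplace_major f a b U \<longleftrightarrow> continuous_on {a..b} U \<and>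
     (\<forall>x\<in>{a..b}. lower_LD U a b x \<ge> ereal (f x) \<and> lower_LD U a b x > -\<infinity>)"

definition laplace_minor :: "(real \<Rightarrow> real) \<Rightarrow> real \<Rightarrow> real \<Rightarrow> (real \<Rightarrow> real) \<Rightarrow> bool" where
  "laplace_minor f a b V \<longleftrightarrow> continuous_on {a..b} V \<and>
     (\<forall>x\<in>{a..b}. upper_LD V a b x \<le> ereal (f x) \<and> upper_LD V a b x < \<infinity>)"

definition laplace_integrable :: "(real \<Rightarrow> real) \<Rightarrow> real \<Rightarrow> real \<Rightarrow> bool" where
  "laplace_integrable f a b \<longleftrightarrow>
     (SUP V\<in>{V. laplace_minor f a b V}. ereal (V b - V a)) =
     (INF U\<in>{U. laplace_major f a b U}. ereal (U b - U a)) \<and>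
     \<bar>INF U\<in>{U. laplace_major f a b U}. ereal (U b - U a)\<bar> \<noteq> \<infinity>"

definition laplace_integral :: "(real \<Rightarrow> real) \<Rightarrow> real \<Rightarrow> real \<Rightarrow> real" where
  "laplace_integral f a b =
     (if a < b then real_of_ereal (INF U\<in>{U. laplace_major f a b U}. ereal (U b - U a)) else 0)"

definition lower_D :: "(real \<Rightarrow> real) \<Rightarrow> real \<Rightarrow> real \<Rightarrow> real \<Rightarrow> ereal" where
  "lower_D F a b x = Liminf (at x within {a..b}) (\<lambda>y. ereal ((F y - F x) / (y - x)))"

definition upper_D :: "(real \<Rightarrow> real) \<Rightarrow> real \<Rightarrow> real \<Rightarrow> real \<Rightarrow> ereal" where
  "upper_D F a b x = Limsup (at x within {a..b}) (\<lambda>y. ereal ((F y - F x) / (y - x)))"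

definition perron_major :: "(real \<Rightarrow> real) \<Rightarrow> real \<Rightarrow> real \<Rightarrow> (real \<Rightarrow> real) \<Rightarrow> bool" where
  "perron_major f a b U \<longleftrightarrow> continuous_on {a..b} U \<and>
     (\<forall>x\<in>{a..b}. lower_D U a b x \<ge> ereal (f x) \<and> lower_D U a b x > -\<infinity>)"

definition perron_minor :: "(real \<Rightarrow> real) \<Rightarrow> real \<Rightarrow> real \<Rightarrow> (real \<Rightarrow> real) \<Rightarrow> bool" where
  "perron_minor f a b V \<longleftrightarrow> continuous_on {a..b} V \<and>
     (\<forall>x\<in>{a..b}. upper_D V a b x \<le> ereal (f x) \<and> upper_D V a b x < \<infinity>)"

definition perron_integrable :: "(real \<Rightarrow> real) \<Rightarrow> real \<Rightarrow> real \<Rightarrow> bool" where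
  "perron_integrable f a b \<longleftrightarrow>
     (SUP V\<in>{V. perron_minor f a b V}. ereal (V b - V a)) =
     (INF U\<in>{U. perron_major f a b U}. ereal (U b - U a)) \<and>
     \<bar>INF U\<in>{U. perron_major f a b U}. ereal (U b - U a)\<bar> \<noteq> \<infinity>"

definition perron_integral :: "(real \<Rightarrow> real) \<Rightarrow> real \<Rightarrow> real \<Rightarrow> real" where
  "perron_integral f a b =
     (if a < b then real_of_ereal (INF U\<in>{U. perron_major f a b U}. ereal (U b - U a)) else 0)"

definition bounded_variation_on :: "(real \<Rightarrow> real) \<Rightarrow> real \<Rightarrow> real \<Rightarrow> bool" where
  "bounded_variation_on g a b \<longleftrightarrow>
     (\<exists>M. \<forall>xs. sorted xs \<and> set xs \<subseteq> {a..b} \<longrightarrow>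
        (\<Sum>i<length xs - 1. \<bar>g (xs ! Suc i) - g (xs ! i)\<bar>) \<le> M)"

end

theory Submission
  imports Defs "HOL-Real_Asymp.Real_Asymp"
begin


lemma int_exp_t:
  fixes s d :: real assumes "s > 0" "d \<ge> 0"
  shows "((\<lambda>t. exp (- s * t) * t) has_integral (1 - exp (- s * d) * (s * d + 1)) / s^2) {0..d}"
proof -
  let ?P = "\<lambda>t. - exp (- s * t) * (s * t + 1) / s^2"
  have "((\<lambda>t. exp (- s * t) * t) has_integral ?P d - ?P 0) {0..d}"
  proof (rule fundamental_theorem_of_calculus[OF assms(2)])
    fix x :: real
    have "(?P has_real_derivative exp (- s * x) * x) (at x)"
      apply (rule derivative_eq_intros refl)+ using assms(1) apply (simp add: divide_simps) using assms(1) apply (simp add: algebra_simps power2_eq_square) done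
    then show "(?P has_vector_derivative exp (- s * x) * x) (at x within {0..d})"
      by (simp add: has_real_derivative_iff_has_vector_derivative has_vector_derivative_at_within)
  qed
  moreover have "?P d - ?P 0 = (1 - exp (- s * d) * (s * d + 1)) / s^2"
    using assms by (simp add: field_simps)
  ultimately show ?thesis by simp
qed

lemma int_exp_t2:
  fixes s d :: real assumes "s > 0" "d \<ge> 0"
  shows "((\<lambda>t. exp (- s * t) * t^2) has_integral (2 - exp (- s * d) * (s^2 * d^2 + 2 * s * d + 2)) / s^3) {0..d}"
proof -
  let ?P = "\<lambda>t. - exp (- s * t) * (s^2 * t^2 + 2 * s * t + 2) / s^3"
  have "((\<lambda>t. exp (- s * t) * t^2) has_integral ?P d - ?P 0) {0..d}"
  proof (rule fundamental_theorem_of_calculus[OF assms(2)])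
    fix x :: real
    have "(?P has_real_derivative exp (- s * x) * x^2) (at x)"
      apply (rule derivative_eq_intros refl)+ using assms(1) apply (simp add: divide_simps) using assms(1) apply (simp add: algebra_simps power2_eq_square power3_eq_cube) done
    then show "(?P has_vector_derivative exp (- s * x) * x^2) (at x within {0..d})"
      by (simp add: has_real_derivative_iff_has_vector_derivative has_vector_derivative_at_within)
  qed
  moreover have "?P d - ?P 0 = (2 - exp (- s * d) * (s^2 * d^2 + 2 * s * d + 2)) / s^3"
    using assms by (simp add: field_simps)
  ultimately show ?thesis by simp
qed

lemma Kt_le1: fixes s d :: real assumes "s > 0" "d \<ge> 0"
  shows "s^2 * integral {0..d} (\<lambda>t. exp (- s * t) * t) = 1 - exp (- s * d) * (s * d + 1)"
    and "1 - exp (- s * d) * (s * d + 1) \<le> 1"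
  using int_exp_t[OF assms] assms by (auto simp: integral_unique field_simps)

lemma Kt2_le: fixes s d :: real assumes "s > 0" "d \<ge> 0"
  shows "s^2 * integral {0..d} (\<lambda>t. exp (- s * t) * t^2) \<le> 2 / s"
proof -
  have "integral {0..d} (\<lambda>t. exp (- s * t) * t^2) = (2 - exp (- s * d) * (s^2 * d^2 + 2 * s * d + 2)) / s^3"
    using int_exp_t2[OF assms] by (simp add: integral_unique)
  moreover have "0 \<le> exp (- s * d) * (s^2 * d^2 + 2 * s * d + 2)"
    using assms by (intro mult_nonneg_nonneg add_nonneg_nonneg) auto
  ultimately have "integral {0..d} (\<lambda>t. exp (- s * t) * t^2) \<le> 2 / s^3"
    using assms by (simp add: divide_right_mono)
  then have "s^2 * integral {0..d} (\<lambda>t. exp (- s * t) * t^2) \<le> s^2 * (2 / s^3)"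
    using assms by (intro mult_left_mono) auto
  also have "s^2 * (2 / s^3) = 2 / s" using assms by (simp add: power2_eq_square power3_eq_cube)
  finally show ?thesis .
qed

lemma K_tendsto: fixes d :: real assumes "d > 0"
  shows "((\<lambda>s. s^2 * integral {0..d} (\<lambda>t. exp (- s * t) * t)) \<longlongrightarrow> 1) at_top"
proof -
  have "((\<lambda>s. 1 - exp (- s * d) * (s * d + 1)) \<longlongrightarrow> 1) at_top"
    using assms by real_asymp
  moreover have "eventually (\<lambda>s. 1 - exp (- s * d) * (s * d + 1) = s^2 * integral {0..d} (\<lambda>t. exp (- s * t) * t)) at_top"
    using eventually_gt_at_top[of 0] by eventually_elim (use Kt_le1(1) assms in force)
  ultimately show ?thesis by (rule Lim_transform_eventually)
qed


lemma lap_lim: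
  fixes h :: "real \<Rightarrow> real" and d m :: real
  assumes d: "d > 0" and hc: "continuous_on {0..d} h"
    and lim: "((\<lambda>t. h t / t) \<longlongrightarrow> m) (at_right 0)"
  shows "((\<lambda>s. s^2 * integral {0..d} (\<lambda>t. exp (- s * t) * h t)) \<longlongrightarrow> m) at_top"
proof -
  have "(h \<longlongrightarrow> h 0) (at 0 within {0..d})"
    using hc d by (simp add: continuous_on_def)
  then have h1: "(h \<longlongrightarrow> h 0) (at_right 0)"
    using d by (simp add: at_within_Icc_at_right)
  have "((\<lambda>t. t * (h t / t)) \<longlongrightarrow> 0 * m) (at_right 0)"
    by (intro tendsto_intros lim) 
  moreover have "eventually (\<lambda>t. t * (h t / t) = h t) (at_right (0::real))"
    by (simp add: eventually_at_right_field) (auto intro!: exI[of _ 1])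
  ultimately have "(h \<longlongrightarrow> 0) (at_right 0)"
    by (simp add: Lim_transform_eventually)
  then have h0: "h 0 = 0"
    using h1 tendsto_unique trivial_limit_at_right_real by blast
  define r where "r t = h t - m * t" for t
  have rc: "continuous_on {0..d} r" unfolding r_def by (intro continuous_intros hc)
  obtain B where B: "\<And>t. t \<in> {0..d} \<Longrightarrow> \<bar>r t\<bar> \<le> B"
    using compact_imp_bounded[OF compact_continuous_image[OF rc compact_Icc]]
    unfolding bounded_iff by (metis image_eqI real_norm_def)
  have r0: "r 0 = 0" using h0 by (simp add: r_def)
  have Bpos: "B \<ge> 0" using B[of 0] d by auto
  have intc: "\<And>s (q::real\<Rightarrow>real). continuous_on {0..d} q \<Longrightarrow> (\<lambda>t. exp (- s * t) * q t) integrable_on {0..d}"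
    by (intro integrable_continuous_interval continuous_intros) auto
  have split: "s^2 * integral {0..d} (\<lambda>t. exp (- s * t) * h t)
      = m * (s^2 * integral {0..d} (\<lambda>t. exp (- s * t) * t)) + s^2 * integral {0..d} (\<lambda>t. exp (- s * t) * r t)" for s
  proof -
    have "integral {0..d} (\<lambda>t. exp (- s * t) * h t) = integral {0..d} (\<lambda>t. m * (exp (- s * t) * t) + exp (- s * t) * r t)"
      by (rule integral_cong) (simp add: r_def algebra_simps)
    also have "\<dots> = m * integral {0..d} (\<lambda>t. exp (- s * t) * t) + integral {0..d} (\<lambda>t. exp (- s * t) * r t)"
      using intc[OF rc, of s] intc[of "\<lambda>t. t" s]
      by (subst integral_add) (auto intro!: integrable_continuous_interval continuous_intros)
    finally show ?thesis by (simp add: algebra_simps)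
  qed
  show ?thesis
  proof (rule tendstoI)
    fix e :: real assume e: "e > 0"
    define e' where "e' = e / 3"
    have e': "e' > 0" using e by (simp add: e'_def)
    have "eventually (\<lambda>t. dist (h t / t) m < e') (at_right 0)"
      using tendstoD[OF lim e'] .
    then obtain \<eta> where \<eta>: "\<eta> > 0" "\<And>t. 0 < t \<Longrightarrow> t < \<eta> \<Longrightarrow> \<bar>h t / t - m\<bar> < e'"
      by (auto simp: eventually_at_right_field dist_real_def)
    define \<eta>' where "\<eta>' = min (\<eta>/2) d"
    have \<eta>': "\<eta>' > 0" "\<eta>' < \<eta>" using \<eta> d by (auto simp: \<eta>'_def)
    define C where "C = B / \<eta>'^2"
    have C: "C \<ge> 0" using Bpos by (simp add: C_def)
    have rb: "\<bar>r t\<bar> \<le> e' * t + C * t^2" if t: "t \<in> {0..d}" for t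
    proof (cases "t = 0")
      case True then show ?thesis using r0 by simp
    next
      case False
      show ?thesis
      proof (cases "t < \<eta>")
        case True
        have "\<bar>r t\<bar> = t * \<bar>h t / t - m\<bar>" using False t by (simp add: r_def field_simps abs_mult[symmetric])
        also have "\<dots> \<le> t * e'" using \<eta>(2)[of t] True False t by (intro mult_left_mono) auto
        finally show ?thesis using C t by (simp add: algebra_simps add_increasing2)
      next
        case nt: False
        have "1 \<le> t^2 / \<eta>'^2" using \<eta>' nt by (simp add: power_mono)
        then have "B \<le> C * t^2" using Bpos by (simp add: C_def) (metis mult.right_neutral mult_left_mono times_divide_eq_right)
        then show ?thesis using B[OF t] e' t by (smt (verit) atLeastAtMost_iff mult_nonneg_nonneg)
      qed
    qed
    have bound: "\<bar>s^2 * integral {0..d} (\<lambda>t. exp (- s * t) * r t)\<bar> \<le> e' + 2 * C / s" if s: "s > 0" for s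
    proof -
      have "\<bar>integral {0..d} (\<lambda>t. exp (- s * t) * r t)\<bar> \<le> integral {0..d} (\<lambda>t. e' * (exp (- s * t) * t) + C * (exp (- s * t) * t^2))"
      proof -
        have "norm (integral {0..d} (\<lambda>t. exp (- s * t) * r t)) \<le> integral {0..d} (\<lambda>t. e' * (exp (- s * t) * t) + C * (exp (- s * t) * t^2))"
        proof (rule integral_norm_bound_integral)
          show "(\<lambda>t. exp (- s * t) * r t) integrable_on {0..d}" using intc[OF rc, of s] .
          show "(\<lambda>t. e' * (exp (- s * t) * t) + C * (exp (- s * t) * t^2)) integrable_on {0..d}"
            by (auto intro!: integrable_continuous_interval continuous_intros)
          fix t assume t: "t \<in> {0..d}"
          have "norm (exp (- s * t) * r t) = exp (- s * t) * \<bar>r t\<bar>" by (simp add: abs_mult)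
          also have "\<dots> \<le> exp (- s * t) * (e' * t + C * t^2)" using rb[OF t] by (intro mult_left_mono) auto
          finally show "norm (exp (- s * t) * r t) \<le> e' * (exp (- s * t) * t) + C * (exp (- s * t) * t^2)"
            by (simp add: algebra_simps)
        qed
        then show ?thesis by simp
      qed
      also have "\<dots> = e' * integral {0..d} (\<lambda>t. exp (- s * t) * t) + C * integral {0..d} (\<lambda>t. exp (- s * t) * t^2)"
        by (subst integral_add) (auto intro!: integrable_continuous_interval continuous_intros)
      finally have "s^2 * \<bar>integral {0..d} (\<lambda>t. exp (- s * t) * r t)\<bar> \<le> e' * (s^2 * integral {0..d} (\<lambda>t. exp (- s * t) * t)) + C * (s^2 * integral {0..d} (\<lambda>t. exp (- s * t) * t^2))"
        using s by (metis (no_types, lifting) distrib_left mult.left_commute mult_left_mono zero_le_power2)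
      also have "\<dots> \<le> e' * 1 + C * (2 / s)"
        using Kt_le1[OF s, of d] Kt2_le[OF s, of d] d e' C by (intro add_mono mult_left_mono) auto
      finally show ?thesis by (simp add: abs_mult mult.commute)
    qed
    have ev1: "eventually (\<lambda>s. \<bar>m\<bar> * \<bar>s^2 * integral {0..d} (\<lambda>t. exp (- s * t) * t) - 1\<bar> < e') at_top"
    proof -
      have "eventually (\<lambda>s. dist (s^2 * integral {0..d} (\<lambda>t. exp (- s * t) * t)) 1 < e' / (\<bar>m\<bar> + 1)) at_top"
        using tendstoD[OF K_tendsto[OF d]] e' by simp
      then show ?thesis
      proof eventually_elim
        case (elim s)
        define x where "x = \<bar>s^2 * integral {0..d} (\<lambda>t. exp (- s * t) * t) - 1\<bar>"
        have x: "x < e' / (\<bar>m\<bar> + 1)" "x \<ge> 0" using elim by (auto simp: x_def dist_real_def)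
        have "\<bar>m\<bar> * x \<le> (\<bar>m\<bar> + 1) * x" using x by (simp add: mult_right_mono)
        also have "\<dots> < (\<bar>m\<bar> + 1) * (e' / (\<bar>m\<bar> + 1))" using x by (intro mult_strict_left_mono) auto
        also have "\<dots> = e'" by simp
        finally show ?case by (simp add: x_def)
      qed
    qed
    have ev2: "eventually (\<lambda>s. 2 * C / s < e') at_top"
    proof -
      have "((\<lambda>s. 2 * C / s) \<longlongrightarrow> 0) at_top" by real_asymp
      from tendstoD[OF this e'] show ?thesis by eventually_elim (smt (verit, best) dist_real_def abs_ge_self abs_div_pos divide_nonneg_pos)
    qed
    show "eventually (\<lambda>s. dist (s^2 * integral {0..d} (\<lambda>t. exp (- s * t) * h t)) m < e) at_top"
      using ev1 ev2 eventually_gt_at_top[of 0]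
    proof eventually_elim
      case (elim s)
      have "dist (s^2 * integral {0..d} (\<lambda>t. exp (- s * t) * h t)) m
          = \<bar>m * (s^2 * integral {0..d} (\<lambda>t. exp (- s * t) * t) - 1) + s^2 * integral {0..d} (\<lambda>t. exp (- s * t) * r t)\<bar>"
        unfolding dist_real_def split by (simp add: algebra_simps)
      also have "\<dots> \<le> \<bar>m\<bar> * \<bar>s^2 * integral {0..d} (\<lambda>t. exp (- s * t) * t) - 1\<bar> + (e' + 2 * C / s)"
        using bound[of s] elim abs_triangle_ineq[of "m * (s^2 * integral {0..d} (\<lambda>t. exp (- s * t) * t) - 1)" "s^2 * integral {0..d} (\<lambda>t. exp (- s * t) * r t)"]
        by (simp add: abs_mult)
      also have "\<dots> < e" using elim by (simp add: e'_def)
      finally show ?case .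
    qed
  qed
qed


definition lmaj :: "(real \<Rightarrow> real) \<Rightarrow> real \<Rightarrow> real \<Rightarrow> (real \<Rightarrow> real) \<Rightarrow> bool" where
  "lmaj \<phi> a b U \<longleftrightarrow> continuous_on {a..b} U \<and>
     (\<forall>x\<in>{a..<b}. \<forall>e>0. eventually (\<lambda>s. \<phi> x - e < lap_right U b x s) at_top) \<and>
     (\<forall>x\<in>{a<..b}. \<forall>e>0. eventually (\<lambda>s. \<phi> x - e < lap_left U a x s) at_top)"

definition pmaj :: "(real \<Rightarrow> real) \<Rightarrow> real \<Rightarrow> real \<Rightarrow> (real \<Rightarrow> real) \<Rightarrow> bool" where
  "pmaj \<phi> a b U \<longleftrightarrow> continuous_on {a..b} U \<and>
     (\<forall>x\<in>{a..b}. \<forall>e>0. eventually (\<lambda>y. \<phi> x - e < (U y - U x) / (y - x)) (at x within {a..b}))"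

lemma ereal_le_Liminf_real:
  "ereal c \<le> Liminf F (\<lambda>s. ereal (X s)) \<longleftrightarrow> (\<forall>e>0. eventually (\<lambda>s. c - e < X s) F)"
proof
  assume H: "ereal c \<le> Liminf F (\<lambda>s. ereal (X s))"
  show "\<forall>e>0. eventually (\<lambda>s. c - e < X s) F"
  proof (intro allI impI)
    fix e :: real assume "e > 0"
    then have "ereal (c - e) < ereal c" by simp
    with H have "eventually (\<lambda>s. ereal (c - e) < ereal (X s)) F" unfolding le_Liminf_iff by blast
    then show "eventually (\<lambda>s. c - e < X s) F" by simp
  qed
next
  assume H: "\<forall>e>0. eventually (\<lambda>s. c - e < X s) F"
  show "ereal c \<le> Liminf F (\<lambda>s. ereal (X s))"
    unfolding le_Liminf_iff
  proof (intro allI impI)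
    fix y assume y: "y < ereal c"
    show "eventually (\<lambda>s. y < ereal (X s)) F"
    proof (cases y)
      case (real r)
      with y have "c - r > 0" by simp
      from H[rule_format, OF this] show ?thesis by eventually_elim (simp add: real)
    next
      case PInf with y show ?thesis by simp
    next
      case MInf then show ?thesis by simp
    qed
  qed
qed

lemma Limsup_le_ereal_real:
  "Limsup F (\<lambda>s. ereal (X s)) \<le> ereal c \<longleftrightarrow> (\<forall>e>0. eventually (\<lambda>s. X s < c + e) F)"
proof
  assume H: "Limsup F (\<lambda>s. ereal (X s)) \<le> ereal c"
  show "\<forall>e>0. eventually (\<lambda>s. X s < c + e) F"
  proof (intro allI impI)
    fix e :: real assume "e > 0"
    then have "ereal (c + e) > ereal c" by simp
    with H have "eventually (\<lambda>s. ereal (c + e) > ereal (X s)) F" unfolding Limsup_le_iff by blast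
    then show "eventually (\<lambda>s. X s < c + e) F" by simp
  qed
next
  assume H: "\<forall>e>0. eventually (\<lambda>s. X s < c + e) F"
  show "Limsup F (\<lambda>s. ereal (X s)) \<le> ereal c"
    unfolding Limsup_le_iff
  proof (intro allI impI)
    fix y assume y: "y > ereal c"
    show "eventually (\<lambda>s. y > ereal (X s)) F"
    proof (cases y)
      case (real r)
      with y have "r - c > 0" by simp
      from H[rule_format, OF this] show ?thesis by eventually_elim (simp add: real)
    next
      case PInf then show ?thesis by simp
    next
      case MInf with y show ?thesis by simp
    qed
  qed
qed

lemma lap_right_neg: "lap_right (\<lambda>y. - V y) b x s = - lap_right V b x s"
proof -
  have "(\<lambda>t. exp (- s * t) * (- V (x + t) - - V x)) = (\<lambda>t. - (exp (- s * t) * (V (x + t) - V x)))"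
    by (rule ext) (simp add: algebra_simps)
  then show ?thesis unfolding lap_right_def by (simp add: integral_neg)
qed

lemma lap_left_neg: "lap_left (\<lambda>y. - V y) a x s = - lap_left V a x s"
proof -
  have "(\<lambda>t. exp (- s * t) * (- V (x - t) - - V x)) = (\<lambda>t. - (exp (- s * t) * (V (x - t) - V x)))"
    by (rule ext) (simp add: algebra_simps)
  then show ?thesis unfolding lap_left_def by (simp add: integral_neg)
qed

lemma lap_left_reflect: "lap_left F a x s = lap_right (\<lambda>y. - F (- y)) (- a) (- x) s"
proof -
  have "(\<lambda>t. exp (- s * t) * (- F (- (- x + t)) - - F (- (- x)))) = (\<lambda>t. - (exp (- s * t) * (F (x - t) - F x)))"
    by (rule ext) (simp add: algebra_simps)
  then show ?thesis unfolding lap_left_def lap_right_def by (simp add: integral_neg)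
qed

lemma ereal_gt_minf: "ereal c \<le> L \<Longrightarrow> L > -\<infinity>"
  by (cases L) auto

lemma ereal_lt_pinf: "L \<le> ereal c \<Longrightarrow> L < \<infinity>"
  by (cases L) auto

lemma lmaj_iff:
  assumes "a < b"
  shows "laplace_major \<phi> a b U \<longleftrightarrow> lmaj \<phi> a b U"
proof -
  have pt: "(ereal (\<phi> x) \<le> lower_LD U a b x \<and> lower_LD U a b x > -\<infinity>) \<longleftrightarrow>
      ((x < b \<longrightarrow> (\<forall>e>0. eventually (\<lambda>s. \<phi> x - e < lap_right U b x s) at_top)) \<and>
       (a < x \<longrightarrow> (\<forall>e>0. eventually (\<lambda>s. \<phi> x - e < lap_left U a x s) at_top)))"
    if x: "x \<in> {a..b}" for x
  proof -
    note R = ereal_le_Liminf_real[of "\<phi> x" at_top "lap_right U b x"]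
    note L = ereal_le_Liminf_real[of "\<phi> x" at_top "lap_left U a x"]
    consider "x = a" | "x = b" | "a < x" "x < b" using x by fastforce
    then show ?thesis
    proof cases
      case 1 then show ?thesis using assms R ereal_gt_minf by (auto simp: lower_LD_def)
    next
      case 2 then show ?thesis using assms L ereal_gt_minf by (auto simp: lower_LD_def)
    next
      case 3 then show ?thesis using assms R L ereal_gt_minf by (auto simp: lower_LD_def)
    qed
  qed
  show ?thesis unfolding laplace_major_def lmaj_def using pt by auto
qed

lemma lmin_iff:
  assumes "a < b"
  shows "laplace_minor \<phi> a b V \<longleftrightarrow> lmaj (\<lambda>x. - \<phi> x) a b (\<lambda>x. - V x)"
proof -
  have eq: "(- \<phi> x - e < - q) \<longleftrightarrow> (q < \<phi> x + e)" for e q x :: real by auto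
  have pt: "(upper_LD V a b x \<le> ereal (\<phi> x) \<and> upper_LD V a b x < \<infinity>) \<longleftrightarrow>
      ((x < b \<longrightarrow> (\<forall>e>0. eventually (\<lambda>s. - \<phi> x - e < lap_right (\<lambda>x. - V x) b x s) at_top)) \<and>
       (a < x \<longrightarrow> (\<forall>e>0. eventually (\<lambda>s. - \<phi> x - e < lap_left (\<lambda>x. - V x) a x s) at_top)))"
    if x: "x \<in> {a..b}" for x
  proof -
    note R = Limsup_le_ereal_real[of at_top "lap_right V b x" "\<phi> x"]
    note L = Limsup_le_ereal_real[of at_top "lap_left V a x" "\<phi> x"]
    consider "x = a" | "x = b" | "a < x" "x < b" using x by fastforce
    then show ?thesis
    proof cases
      case 1 then show ?thesis using assms R ereal_lt_pinf by (auto simp: upper_LD_def lap_right_neg lap_left_neg eq)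
    next
      case 2 then show ?thesis using assms L ereal_lt_pinf by (auto simp: upper_LD_def lap_right_neg lap_left_neg eq)
    next
      case 3 then show ?thesis using assms R L ereal_lt_pinf by (auto simp: upper_LD_def lap_right_neg lap_left_neg eq)
    qed
  qed
  have c: "continuous_on {a..b} V \<longleftrightarrow> continuous_on {a..b} (\<lambda>x. - V x)"
    using continuous_on_minus[of "{a..b}" "\<lambda>x. - V x"] continuous_on_minus[of "{a..b}" V] by auto
  show ?thesis unfolding laplace_minor_def lmaj_def using pt c by auto
qed

lemma pmaj_iff: "perron_major \<phi> a b U \<longleftrightarrow> pmaj \<phi> a b U"
proof -
  have pt: "(ereal (\<phi> x) \<le> lower_D U a b x \<and> lower_D U a b x > -\<infinity>) \<longleftrightarrow>
     (\<forall>e>0. eventually (\<lambda>y. \<phi> x - e < (U y - U x) / (y - x)) (at x within {a..b}))" for x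
    unfolding lower_D_def ereal_le_Liminf_real[symmetric] using ereal_gt_minf by auto
  show ?thesis unfolding perron_major_def pmaj_def using pt by auto
qed

lemma pmin_iff: "perron_minor \<phi> a b V \<longleftrightarrow> pmaj (\<lambda>x. - \<phi> x) a b (\<lambda>x. - V x)"
proof -
  have eq: "(- \<phi> x - e < (- V y - - V x) / (y - x)) \<longleftrightarrow> ((V y - V x) / (y - x) < \<phi> x + e)" for e x y
  proof -
    have "(- V y - - V x) / (y - x) = - ((V y - V x) / (y - x))" by (metis minus_diff_eq minus_divide_left diff_minus_eq_add uminus_add_conv_diff)
    then show ?thesis by auto
  qed
  have pt: "(upper_D V a b x \<le> ereal (\<phi> x) \<and> upper_D V a b x < \<infinity>) \<longleftrightarrow>
     (\<forall>e>0. eventually (\<lambda>y. - \<phi> x - e < (- V y - - V x) / (y - x)) (at x within {a..b}))" for x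
    unfolding upper_D_def eq Limsup_le_ereal_real[symmetric] using ereal_lt_pinf by auto
  have c: "continuous_on {a..b} V \<longleftrightarrow> continuous_on {a..b} (\<lambda>x. - V x)"
    using continuous_on_minus[of "{a..b}" "\<lambda>x. - V x"] continuous_on_minus[of "{a..b}" V] by auto
  show ?thesis unfolding perron_minor_def pmaj_def using pt c by auto
qed


lemma dist_real_lt: "dist (x::real) l < e \<longleftrightarrow> l - e < x \<and> x < l + e"
  by (simp add: dist_real_def abs_diff_less_iff)

lemma cont_shift_r:
  fixes F :: "real \<Rightarrow> real" and a b x :: real
  assumes "continuous_on {a..b} F" "x \<in> {a..b}"
  shows "continuous_on {0..b-x} (\<lambda>t. F (x + t))"
proof -
  have "continuous_on {0..b-x} (\<lambda>t. x + t)" by (auto intro!: continuous_on_add continuous_on_const continuous_on_id)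
  then show ?thesis by (rule continuous_on_compose2[OF assms(1)]) (use assms(2) in auto)
qed

lemma cont_shift_l:
  fixes F :: "real \<Rightarrow> real" and a b x :: real
  assumes "continuous_on {a..b} F" "x \<in> {a..b}"
  shows "continuous_on {0..x-a} (\<lambda>t. F (x - t))"
proof -
  have "continuous_on {0..x-a} (\<lambda>t. x - t)" by (auto intro!: continuous_on_diff continuous_on_const continuous_on_id)
  then show ?thesis by (rule continuous_on_compose2[OF assms(1)]) (use assms(2) in auto)
qed

lemma lap_right_decomp:
  assumes x: "x \<in> {a..b}" and U: "continuous_on {a..b} U" and V: "continuous_on {a..b} V"
    and h: "continuous_on {0..b-x} h"
    and eq: "\<And>t. t \<in> {0..b-x} \<Longrightarrow> W (x+t) - W x = \<alpha> * (U (x+t) - U x) + \<beta> * (V (x+t) - V x) + h t"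
  shows "lap_right W b x s = \<alpha> * lap_right U b x s + \<beta> * lap_right V b x s
           + s^2 * integral {0..b-x} (\<lambda>t. exp (- s * t) * h t)"
proof -
  have cU: "continuous_on {0..b-x} (\<lambda>t. exp (- s * t) * (U (x + t) - U x))"
    by (intro continuous_intros cont_shift_r[OF U x])
  have cV: "continuous_on {0..b-x} (\<lambda>t. exp (- s * t) * (V (x + t) - V x))"
    by (intro continuous_intros cont_shift_r[OF V x])
  have ch: "continuous_on {0..b-x} (\<lambda>t. exp (- s * t) * h t)"
    by (intro continuous_intros h)
  have "integral {0..b-x} (\<lambda>t. exp (- s * t) * (W (x + t) - W x))
      = integral {0..b-x} (\<lambda>t. \<alpha> * (exp (- s * t) * (U (x + t) - U x)) + \<beta> * (exp (- s * t) * (V (x + t) - V x)) + exp (- s * t) * h t)"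
  proof (rule integral_cong)
    fix t assume t: "t \<in> {0..b-x}"
    show "exp (- s * t) * (W (x + t) - W x) = \<alpha> * (exp (- s * t) * (U (x + t) - U x)) + \<beta> * (exp (- s * t) * (V (x + t) - V x)) + exp (- s * t) * h t"
      by (simp only: eq[OF t]) (simp add: algebra_simps)
  qed
  also have "\<dots> = \<alpha> * integral {0..b-x} (\<lambda>t. exp (- s * t) * (U (x + t) - U x)) + \<beta> * integral {0..b-x} (\<lambda>t. exp (- s * t) * (V (x + t) - V x))
       + integral {0..b-x} (\<lambda>t. exp (- s * t) * h t)"
    using integrable_continuous_interval[OF cU] integrable_continuous_interval[OF cV] integrable_continuous_interval[OF ch]
    by (simp add: integral_add integrable_on_mult_right integrable_add)
  finally show ?thesis unfolding lap_right_def by (simp add: algebra_simps)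
qed

lemma lap_right_tail:
  assumes "a \<le> x" "x < y" "y \<le> b" and U: "continuous_on {a..b} U"
  shows "((\<lambda>s. lap_right U b x s - lap_right U y x s) \<longlongrightarrow> 0) at_top"
proof -
  have x: "x \<in> {a..b}" using assms by auto
  have cU: "continuous_on {0..b-x} (\<lambda>t. exp (- s * t) * (U (x + t) - U x))" for s
    by (intro continuous_intros cont_shift_r[OF U x])
  obtain B where B: "\<And>z. z \<in> {a..b} \<Longrightarrow> \<bar>U z\<bar> \<le> B"
    using compact_imp_bounded[OF compact_continuous_image[OF U compact_Icc]]
    unfolding bounded_iff by (metis image_eqI real_norm_def)
  have diff: "lap_right U b x s - lap_right U y x s = s^2 * integral {y-x..b-x} (\<lambda>t. exp (- s * t) * (U (x + t) - U x))" for s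
  proof -
    have "integral {0..y-x} (\<lambda>t. exp (- s * t) * (U (x + t) - U x)) + integral {y-x..b-x} (\<lambda>t. exp (- s * t) * (U (x + t) - U x))
        = integral {0..b-x} (\<lambda>t. exp (- s * t) * (U (x + t) - U x))"
      using assms by (intro Henstock_Kurzweil_Integration.integral_combine integrable_continuous_interval[OF cU]) auto
    then have "integral {0..b-x} (\<lambda>t. exp (- s * t) * (U (x + t) - U x)) - integral {0..y-x} (\<lambda>t. exp (- s * t) * (U (x + t) - U x))
        = integral {y-x..b-x} (\<lambda>t. exp (- s * t) * (U (x + t) - U x))" by linarith
    then show ?thesis unfolding lap_right_def by (simp add: right_diff_distrib[symmetric])
  qed
  have bnd: "\<bar>lap_right U b x s - lap_right U y x s\<bar> \<le> (2 * B * (b - x)) * (s^2 * exp (- s * (y - x)))" if s: "s > 0" for s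
  proof -
    have "norm (integral {y-x..b-x} (\<lambda>t. exp (- s * t) * (U (x + t) - U x))) \<le> exp (- s * (y - x)) * (2 * B) * ((b-x) - (y-x))"
    proof (rule integral_bound)
      show "y - x \<le> b - x" using assms by auto
      show "continuous_on {y-x..b-x} (\<lambda>t. exp (- s * t) * (U (x + t) - U x))"
        using cU[of s] by (rule continuous_on_subset) (use assms in auto)
      fix t assume t: "t \<in> {y-x..b-x}"
      have "norm (exp (- s * t) * (U (x + t) - U x)) = exp (- s * t) * \<bar>U (x + t) - U x\<bar>" by (simp add: abs_mult)
      also have "\<dots> \<le> exp (- s * (y - x)) * (2 * B)"
      proof (rule mult_mono)
        show "exp (- s * t) \<le> exp (- s * (y - x))" using t s by (simp add: mult_left_mono)
        show "\<bar>U (x + t) - U x\<bar> \<le> 2 * B" using B[of "x+t"] B[of x] t assms by auto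
      qed (use B[of x] assms in auto)
      finally show "norm (exp (- s * t) * (U (x + t) - U x)) \<le> exp (- s * (y - x)) * (2 * B)" .
    qed
    also have "\<dots> \<le> exp (- s * (y - x)) * (2 * B) * (b - x)"
      using B[of x] assms by (intro mult_left_mono) auto
    finally have "\<bar>integral {y-x..b-x} (\<lambda>t. exp (- s * t) * (U (x + t) - U x))\<bar> \<le> exp (- s * (y - x)) * (2 * B) * (b - x)" by simp
    then have "s^2 * \<bar>integral {y-x..b-x} (\<lambda>t. exp (- s * t) * (U (x + t) - U x))\<bar> \<le> s^2 * (exp (- s * (y - x)) * (2 * B) * (b - x))"
      by (intro mult_left_mono) auto
    then show ?thesis by (simp add: diff abs_mult algebra_simps)
  qed
  have lim: "((\<lambda>s. (2 * B * (b - x)) * (s^2 * exp (- s * (y - x)))) \<longlongrightarrow> 0) at_top"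
  proof -
    have "((\<lambda>s. s^2 * exp (- s * (y - x))) \<longlongrightarrow> 0) at_top" using assms by real_asymp
    from tendsto_mult[OF tendsto_const this, of "2 * B * (b - x)"] show ?thesis by simp
  qed
  show ?thesis
  proof (rule Lim_null_comparison[OF _ lim])
    show "eventually (\<lambda>s. norm (lap_right U b x s - lap_right U y x s) \<le> (2 * B * (b - x)) * (s^2 * exp (- s * (y - x)))) at_top"
      using eventually_gt_at_top[of 0] by eventually_elim (use bnd in simp)
  qed
qed

lemma lmaj_restrict:
  assumes "lmaj \<phi> a b U" "a < y" "y \<le> b"
  shows "lmaj \<phi> a y U"
proof -
  have U: "continuous_on {a..b} U" using assms(1) by (simp add: lmaj_def)
  have R: "\<forall>e>0. eventually (\<lambda>s. \<phi> x - e < lap_right U y x s) at_top" if x: "x \<in> {a..<y}" for x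
  proof (cases "y = b")
    case True then show ?thesis using assms(1) x by (simp add: lmaj_def)
  next
    case False
    show ?thesis
    proof (intro allI impI)
      fix e :: real assume e: "e > 0"
      have e2: "e / 2 > 0" using e by simp
      have "eventually (\<lambda>s. \<phi> x - e/2 < lap_right U b x s) at_top"
        using assms(1) x False assms(3) e2 by (auto simp: lmaj_def)
      moreover have "eventually (\<lambda>s. dist (lap_right U b x s - lap_right U y x s) 0 < e/2) at_top"
        using tendstoD[OF lap_right_tail[of a x y b U] e2] x U assms(3) by auto
      ultimately show "eventually (\<lambda>s. \<phi> x - e < lap_right U y x s) at_top"
        by eventually_elim (auto simp: dist_real_def abs_if split: if_splits)
    qed
  qed
  have L: "\<forall>e>0. eventually (\<lambda>s. \<phi> x - e < lap_left U a x s) at_top" if x: "x \<in> {a<..y}" for x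
    using assms x by (auto simp: lmaj_def)
  have "continuous_on {a..y} U" using U by (rule continuous_on_subset) (use assms in auto)
  then show ?thesis using R L unfolding lmaj_def by blast
qed

lemma lap_mono:
  assumes cd: "a \<le> c" "c \<le> d" "d \<le> b" and H: "continuous_on {a..b} H"
    and R: "\<And>x e. x \<in> {a..<b} \<Longrightarrow> e > 0 \<Longrightarrow> eventually (\<lambda>s. - e < lap_right H b x s) at_top"
  shows "H c \<le> H d"
proof (rule ccontr)
  assume "\<not> H c \<le> H d"
  then have Hcd: "H d < H c" by simp
  then have cd': "c < d" using cd by (cases "c = d") auto
  define \<eta> where "\<eta> = (H c - H d) / (2 * (d - c))"
  have \<eta>: "\<eta> > 0" using Hcd cd' by (simp add: \<eta>_def)
  define K where "K y = H y + \<eta> * y" for y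
  have Kc: "continuous_on {a..b} K" unfolding K_def by (intro continuous_intros H)
  have "\<eta> * (d - c) = (H c - H d) / 2" using cd' by (simp add: \<eta>_def field_simps)
  then have "K c - K d = (H c - H d) / 2" by (simp add: K_def algebra_simps)
  then have KcKd: "K d < K c" using Hcd by simp
  obtain x0 where x0: "x0 \<in> {c..d}" "\<And>y. y \<in> {c..d} \<Longrightarrow> K y \<le> K x0"
    using continuous_attains_sup[of "{c..d}" K] continuous_on_subset[OF Kc, of "{c..d}"] cd cd' by auto
  have "x0 \<noteq> d" using x0 KcKd cd' by (metis atLeastAtMost_iff less_eq_real_def not_le)
  then have x0d: "x0 < d" using x0 by auto
  define \<rho> where "\<rho> = d - x0"
  have \<rho>: "\<rho> > 0" using x0d by (simp add: \<rho>_def)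
  have x0ab: "x0 \<in> {a..<b}" using x0 x0d cd by auto
  obtain B where B: "\<And>z. z \<in> {a..b} \<Longrightarrow> \<bar>K z\<bar> \<le> B"
    using compact_imp_bounded[OF compact_continuous_image[OF Kc compact_Icc]]
    unfolding bounded_iff by (metis image_eqI real_norm_def)
  have B0: "B \<ge> 0" using B[of a] cd by auto
  define C where "C = 2 * B / \<rho>^2"
  have C0: "C \<ge> 0" using B0 by (simp add: C_def)
  have Kt: "K (x0 + t) - K x0 \<le> C * t^2" if t: "t \<in> {0..b-x0}" for t
  proof (cases "t \<le> \<rho>")
    case True
    then have "K (x0 + t) \<le> K x0" using x0 t by (intro x0(2)) (auto simp: \<rho>_def)
    moreover have "0 \<le> C * t^2" using C0 by simp
    ultimately show ?thesis by linarith
  next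
    case False
    have "1 \<le> t^2 / \<rho>^2" using \<rho> False by (simp add: power_mono)
    then have "2 * B * 1 \<le> 2 * B * (t^2 / \<rho>^2)" using B0 by (intro mult_left_mono) auto
    moreover have "C * t^2 = 2 * B * (t^2 / \<rho>^2)" by (simp add: C_def)
    ultimately have "2 * B \<le> C * t^2" by simp
    moreover have "K (x0 + t) - K x0 \<le> 2 * B" using B[of "x0+t"] B[of x0] t x0ab by auto
    ultimately show ?thesis by simp
  qed
  have decomp: "lap_right K b x0 s = lap_right H b x0 s + \<eta> * (s^2 * integral {0..b-x0} (\<lambda>t. exp (- s * t) * t))" for s
  proof -
    have "lap_right K b x0 s = 1 * lap_right H b x0 s + 0 * lap_right H b x0 s + s^2 * integral {0..b-x0} (\<lambda>t. exp (- s * t) * (\<eta> * t))"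
      by (rule lap_right_decomp[OF _ H H]) (use x0ab in \<open>auto simp: K_def algebra_simps intro!: continuous_intros\<close>)
    also have "integral {0..b-x0} (\<lambda>t. exp (- s * t) * (\<eta> * t)) = \<eta> * integral {0..b-x0} (\<lambda>t. exp (- s * t) * t)"
      by (subst integral_mult_right[symmetric]) (simp add: algebra_simps)
    finally show ?thesis by (simp add: algebra_simps)
  qed
  have upper: "lap_right K b x0 s \<le> 2 * C / s" if s: "s > 0" for s
  proof -
    have "integral {0..b-x0} (\<lambda>t. exp (- s * t) * (K (x0 + t) - K x0)) \<le> integral {0..b-x0} (\<lambda>t. C * (exp (- s * t) * t^2))"
    proof (rule integral_le)
      show "(\<lambda>t. exp (- s * t) * (K (x0 + t) - K x0)) integrable_on {0..b-x0}"
        using x0ab by (intro integrable_continuous_interval continuous_intros cont_shift_r[OF Kc]) auto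
      show "(\<lambda>t. C * (exp (- s * t) * t^2)) integrable_on {0..b-x0}"
        by (intro integrable_continuous_interval continuous_intros)
      fix t assume t: "t \<in> {0..b-x0}"
      show "exp (- s * t) * (K (x0 + t) - K x0) \<le> C * (exp (- s * t) * t^2)"
        using mult_left_mono[OF Kt[OF t], of "exp (- s * t)"] by (simp add: algebra_simps)
    qed
    also have "\<dots> = C * integral {0..b-x0} (\<lambda>t. exp (- s * t) * t^2)" by simp
    finally have "s^2 * integral {0..b-x0} (\<lambda>t. exp (- s * t) * (K (x0 + t) - K x0)) \<le> s^2 * (C * integral {0..b-x0} (\<lambda>t. exp (- s * t) * t^2))"
      by (intro mult_left_mono) auto
    then have "lap_right K b x0 s \<le> C * (s^2 * integral {0..b-x0} (\<lambda>t. exp (- s * t) * t^2))"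
      unfolding lap_right_def by (simp add: mult_ac)
    also have "\<dots> \<le> C * (2 / s)" using Kt2_le[OF s, of "b - x0"] x0ab C0 by (intro mult_left_mono) auto
    finally show ?thesis by (simp add: mult.commute)
  qed
  have ev1: "eventually (\<lambda>s. - (\<eta>/2) < lap_right H b x0 s) at_top" using R[OF x0ab] \<eta> by simp
  have ev2: "eventually (\<lambda>s. dist (s^2 * integral {0..b-x0} (\<lambda>t. exp (- s * t) * t)) 1 < 1/4) at_top"
    using tendstoD[OF K_tendsto[of "b - x0"], of "1/4"] x0ab by auto
  have ev3: "eventually (\<lambda>s. 2 * C / s < \<eta> / 4) at_top"
  proof -
    have lim0: "((\<lambda>s. 2 * C / s) \<longlongrightarrow> 0) at_top" by real_asymp
    have "\<eta>/4 > 0" using \<eta> by simp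
    from order_tendstoD(2)[OF lim0 this] show ?thesis .
  qed
  have "eventually (\<lambda>s::real. False) at_top"
    using ev1 ev2 ev3 eventually_gt_at_top[of 0]
  proof eventually_elim
    case (elim s)
    have k: "s^2 * integral {0..b-x0} (\<lambda>t. exp (- s * t) * t) > 3/4" using elim(2) unfolding dist_real_lt by simp
    have "\<eta> * (3/4) < \<eta> * (s^2 * integral {0..b-x0} (\<lambda>t. exp (- s * t) * t))"
      using k \<eta> by (intro mult_strict_left_mono) auto
    then have "\<eta> / 4 < lap_right K b x0 s" using elim(1) decomp[of s] by simp
    then show False using upper[OF elim(4)] elim(3) by simp
  qed
  then show False by simp
qed

lemma lmaj_minor_mono:
  assumes "lmaj \<phi> a b U" "lmaj (\<lambda>x. - \<phi> x) a b (\<lambda>x. - V x)" "a \<le> c" "c \<le> d" "d \<le> b"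
  shows "V d - V c \<le> U d - U c"
proof -
  have U: "continuous_on {a..b} U" and V': "continuous_on {a..b} (\<lambda>x. - V x)"
    using assms by (auto simp: lmaj_def)
  have V: "continuous_on {a..b} V" using continuous_on_minus[OF V'] by simp
  define H where "H y = U y - V y" for y
  have H: "continuous_on {a..b} H" unfolding H_def by (intro continuous_intros U V)
  have "H c \<le> H d"
  proof (rule lap_mono[OF assms(3-5) H])
    fix x e :: real assume x: "x \<in> {a..<b}" and e: "e > 0"
    have dec: "lap_right H b x s = 1 * lap_right U b x s + 1 * lap_right (\<lambda>x. - V x) b x s + s^2 * integral {0..b-x} (\<lambda>t. exp (- s * t) * 0)" for s
      by (rule lap_right_decomp[OF _ U V']) (use x in \<open>auto simp: H_def\<close>)
    have e2: "e/2 > 0" using e by simp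
    have "eventually (\<lambda>s. \<phi> x - e/2 < lap_right U b x s) at_top" using assms(1) x e2 by (auto simp: lmaj_def)
    moreover have "eventually (\<lambda>s. - \<phi> x - e/2 < lap_right (\<lambda>x. - V x) b x s) at_top" using assms(2) x e2 by (auto simp: lmaj_def)
    ultimately show "eventually (\<lambda>s. - e < lap_right H b x s) at_top"
      by eventually_elim (simp add: dec)
  qed
  then show ?thesis by (simp add: H_def)
qed


lemma perron_mono:
  fixes H :: "real \<Rightarrow> real" and a b c d :: real
  assumes cd: "a \<le> c" "c \<le> d" "d \<le> b" and H: "continuous_on {a..b} H"
    and R: "\<And>x e. x \<in> {a..<b} \<Longrightarrow> e > 0 \<Longrightarrow> eventually (\<lambda>y. - e < (H y - H x) / (y - x)) (at x within {a..b})"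
  shows "H c \<le> H d"
proof (rule ccontr)
  assume "\<not> H c \<le> H d"
  then have Hcd: "H d < H c" by simp
  then have cd': "c < d" using cd by (cases "c = d") auto
  define \<eta> where "\<eta> = (H c - H d) / (2 * (d - c))"
  have \<eta>: "\<eta> > 0" using Hcd cd' by (simp add: \<eta>_def)
  define K where "K y = H y + \<eta> * y" for y
  have Kc: "continuous_on {a..b} K" unfolding K_def by (intro continuous_intros H)
  have "\<eta> * (d - c) = (H c - H d) / 2" using cd' by (simp add: \<eta>_def field_simps)
  then have "K c - K d = (H c - H d) / 2" by (simp add: K_def algebra_simps)
  then have KcKd: "K d < K c" using Hcd by simp
  obtain x0 where x0: "x0 \<in> {c..d}" "\<And>y. y \<in> {c..d} \<Longrightarrow> K y \<le> K x0"
    using continuous_attains_sup[of "{c..d}" K] continuous_on_subset[OF Kc, of "{c..d}"] cd cd' by auto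
  have "x0 \<noteq> d" using x0 KcKd cd' by (metis atLeastAtMost_iff less_eq_real_def not_le)
  then have x0d: "x0 < d" using x0 by auto
  have x0ab: "x0 \<in> {a..<b}" using x0 x0d cd by auto
  have "\<eta>/2 > 0" using \<eta> by simp
  from R[OF x0ab this] obtain \<delta> where \<delta>: "\<delta> > 0"
    "\<And>y. y \<in> {a..b} \<Longrightarrow> y \<noteq> x0 \<Longrightarrow> dist y x0 < \<delta> \<Longrightarrow> - (\<eta>/2) < (H y - H x0) / (y - x0)"
    unfolding eventually_at by blast
  define y where "y = x0 + min (\<delta>/2) (d - x0)"
  have y: "y \<in> {c..d}" "y \<in> {a..b}" "y \<noteq> x0" "dist y x0 < \<delta>" "y > x0"
    using x0 x0d \<delta> cd by (auto simp: y_def dist_real_def)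
  have q: "- (\<eta>/2) < (H y - H x0) / (y - x0)" using \<delta>(2) y by auto
  have "K y \<le> K x0" using x0(2) y by auto
  then have "H y - H x0 \<le> - \<eta> * (y - x0)" by (simp add: K_def algebra_simps)
  then have "(H y - H x0) / (y - x0) \<le> - \<eta>" using y(5) by (simp add: divide_le_eq)
  then show False using q \<eta> by simp
qed

lemma pmaj_minor_mono:
  assumes "pmaj \<phi> a b U" "pmaj (\<lambda>x. - \<phi> x) a b (\<lambda>x. - V x)" "a \<le> c" "c \<le> d" "d \<le> b"
  shows "V d - V c \<le> U d - U c"
proof -
  have U: "continuous_on {a..b} U" and V': "continuous_on {a..b} (\<lambda>x. - V x)"
    using assms by (auto simp: pmaj_def)
  have V: "continuous_on {a..b} V" using continuous_on_minus[OF V'] by simp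
  define H where "H y = U y - V y" for y
  have H: "continuous_on {a..b} H" unfolding H_def by (intro continuous_intros U V)
  have "H c \<le> H d"
  proof (rule perron_mono[OF assms(3-5) H])
    fix x e :: real assume x: "x \<in> {a..<b}" and e: "e > 0"
    have e2: "e/2 > 0" using e by simp
    have "eventually (\<lambda>y. \<phi> x - e/2 < (U y - U x) / (y - x)) (at x within {a..b})" using assms(1) x e2 by (auto simp: pmaj_def)
    moreover have "eventually (\<lambda>y. - \<phi> x - e/2 < (- V y - - V x) / (y - x)) (at x within {a..b})" using assms(2) x e2 by (auto simp: pmaj_def)
    ultimately show "eventually (\<lambda>y. - e < (H y - H x) / (y - x)) (at x within {a..b})"
    proof eventually_elim
      case (elim y)
      have "(H y - H x) / (y - x) = (U y - U x) / (y - x) + (- V y - - V x) / (y - x)"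
        by (simp add: H_def add_divide_distrib[symmetric] algebra_simps)
      then show ?case using elim by simp
    qed
  qed
  then show ?thesis by (simp add: H_def)
qed


lemma tendsto_local_const:
  assumes "\<eta> > 0" "\<And>t. 0 < t \<Longrightarrow> t < \<eta> \<Longrightarrow> h t = m * t"
  shows "((\<lambda>t. h t / t) \<longlongrightarrow> m) (at_right (0::real))"
proof -
  have "eventually (\<lambda>t. m = h t / t) (at_right (0::real))"
    unfolding eventually_at_right_field using assms by (intro exI[of _ \<eta>]) auto
  then show ?thesis by (rule Lim_transform_eventually[OF tendsto_const])
qed

lemma lap_left_alt: "lap_left U a x s = s^2 * integral {0..x-a} (\<lambda>t. exp (- s * t) * (- (U (x - t) - U x)))"
proof -
  have "(\<lambda>t. exp (- s * t) * (- (U (x - t) - U x))) = (\<lambda>t. - (exp (- s * t) * (U (x - t) - U x)))"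
    by (rule ext) (simp add: algebra_simps)
  then show ?thesis unfolding lap_left_def by (simp add: integral_neg)
qed

lemma lmaj_of_local_linear:
  assumes ab: "a < b" and M: "continuous_on {a..b} M"
    and R: "\<And>x. x \<in> {a..<b} \<Longrightarrow> \<exists>\<eta>>0. \<exists>m. \<phi> x \<le> m \<and> (\<forall>t\<in>{0..\<eta>}. M (x + t) - M x = m * t)"
    and L: "\<And>x. x \<in> {a<..b} \<Longrightarrow> \<exists>\<eta>>0. \<exists>m. \<phi> x \<le> m \<and> (\<forall>t\<in>{0..\<eta>}. M (x - t) - M x = - (m * t))"
  shows "lmaj \<phi> a b M"
  unfolding lmaj_def
proof (intro conjI ballI allI impI)
  show "continuous_on {a..b} M" by fact
next
  fix x e :: real assume x: "x \<in> {a..<b}" and e: "e > 0"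
  obtain \<eta> m where \<eta>: "\<eta> > 0" "\<phi> x \<le> m" "\<And>t. t \<in> {0..\<eta>} \<Longrightarrow> M (x + t) - M x = m * t"
    using R[OF x] by blast
  have xab: "x \<in> {a..b}" using x by auto
  have "((\<lambda>s. s^2 * integral {0..b-x} (\<lambda>t. exp (- s * t) * (M (x + t) - M x))) \<longlongrightarrow> m) at_top"
  proof (rule lap_lim)
    show "b - x > 0" using x by auto
    show "continuous_on {0..b-x} (\<lambda>t. M (x + t) - M x)"
      by (intro continuous_intros cont_shift_r[OF M xab])
    show "((\<lambda>t. (M (x + t) - M x) / t) \<longlongrightarrow> m) (at_right 0)"
      by (rule tendsto_local_const[OF \<eta>(1)]) (use \<eta>(3) in auto)
  qed
  then have "((\<lambda>s. lap_right M b x s) \<longlongrightarrow> m) at_top" by (simp add: lap_right_def)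
  from order_tendstoD(1)[OF this, of "\<phi> x - e"] show "eventually (\<lambda>s. \<phi> x - e < lap_right M b x s) at_top"
    using \<eta>(2) e by simp
next
  fix x e :: real assume x: "x \<in> {a<..b}" and e: "e > 0"
  obtain \<eta> m where \<eta>: "\<eta> > 0" "\<phi> x \<le> m" "\<And>t. t \<in> {0..\<eta>} \<Longrightarrow> M (x - t) - M x = - (m * t)"
    using L[OF x] by blast
  have xab: "x \<in> {a..b}" using x by auto
  have "((\<lambda>s. s^2 * integral {0..x-a} (\<lambda>t. exp (- s * t) * (- (M (x - t) - M x)))) \<longlongrightarrow> m) at_top"
  proof (rule lap_lim)
    show "x - a > 0" using x by auto
    show "continuous_on {0..x-a} (\<lambda>t. - (M (x - t) - M x))"
      by (intro continuous_intros cont_shift_l[OF M xab])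
    show "((\<lambda>t. - (M (x - t) - M x) / t) \<longlongrightarrow> m) (at_right 0)"
      by (rule tendsto_local_const[OF \<eta>(1)]) (use \<eta>(3) in auto)
  qed
  then have "((\<lambda>s. lap_left M a x s) \<longlongrightarrow> m) at_top" by (simp add: lap_left_alt)
  from order_tendstoD(1)[OF this, of "\<phi> x - e"] show "eventually (\<lambda>s. \<phi> x - e < lap_left M a x s) at_top"
    using \<eta>(2) e by simp
qed

lemma pmaj_of_local_linear:
  assumes ab: "a < b" and M: "continuous_on {a..b} M"
    and R: "\<And>x. x \<in> {a..<b} \<Longrightarrow> \<exists>\<eta>>0. \<exists>m. \<phi> x \<le> m \<and> (\<forall>t\<in>{0..\<eta>}. M (x + t) - M x = m * t)"
    and L: "\<And>x. x \<in> {a<..b} \<Longrightarrow> \<exists>\<eta>>0. \<exists>m. \<phi> x \<le> m \<and> (\<forall>t\<in>{0..\<eta>}. M (x - t) - M x = - (m * t))"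
  shows "pmaj \<phi> a b M"
  unfolding pmaj_def
proof (intro conjI ballI allI impI)
  show "continuous_on {a..b} M" by fact
next
  fix x e :: real assume x: "x \<in> {a..b}" and e: "e > 0"
  have r: "\<exists>\<eta>r>0. \<forall>y. x < y \<and> y < x + \<eta>r \<and> y \<le> b \<longrightarrow> \<phi> x - e < (M y - M x) / (y - x)"
  proof (cases "x < b")
    case True
    have "x \<in> {a..<b}" using x True by auto
    then obtain \<eta> m where \<eta>: "\<eta> > 0" "\<phi> x \<le> m" "\<And>t. t \<in> {0..\<eta>} \<Longrightarrow> M (x + t) - M x = m * t"
      using R by blast
    show ?thesis
    proof (intro exI[of _ \<eta>] conjI allI impI)
      fix y assume y: "x < y \<and> y < x + \<eta> \<and> y \<le> b"
      have "M (x + (y - x)) - M x = m * (y - x)" using y by (intro \<eta>(3)) auto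
      then have "(M y - M x) / (y - x) = m" using y by simp
      then show "\<phi> x - e < (M y - M x) / (y - x)" using \<eta>(2) e by simp
    qed (use \<eta> in auto)
  next
    case False
    then show ?thesis by (intro exI[of _ 1]) auto
  qed
  have l: "\<exists>\<eta>l>0. \<forall>y. y < x \<and> x - \<eta>l < y \<and> a \<le> y \<longrightarrow> \<phi> x - e < (M y - M x) / (y - x)"
  proof (cases "a < x")
    case True
    have "x \<in> {a<..b}" using x True by auto
    then obtain \<eta> m where \<eta>: "\<eta> > 0" "\<phi> x \<le> m" "\<And>t. t \<in> {0..\<eta>} \<Longrightarrow> M (x - t) - M x = - (m * t)"
      using L by blast
    show ?thesis
    proof (intro exI[of _ \<eta>] conjI allI impI)
      fix y assume y: "y < x \<and> x - \<eta> < y \<and> a \<le> y"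
      have "M (x - (x - y)) - M x = - (m * (x - y))" using y by (intro \<eta>(3)) auto
      then have "M y - M x = m * (y - x)" by (simp add: algebra_simps)
      then have "(M y - M x) / (y - x) = m" using y by simp
      then show "\<phi> x - e < (M y - M x) / (y - x)" using \<eta>(2) e by simp
    qed (use \<eta> in auto)
  next
    case False
    then show ?thesis by (intro exI[of _ 1]) auto
  qed
  obtain \<eta>r where \<eta>r: "\<eta>r > 0" "\<And>y. x < y \<Longrightarrow> y < x + \<eta>r \<Longrightarrow> y \<le> b \<Longrightarrow> \<phi> x - e < (M y - M x) / (y - x)" using r by blast
  obtain \<eta>l where \<eta>l: "\<eta>l > 0" "\<And>y. y < x \<Longrightarrow> x - \<eta>l < y \<Longrightarrow> a \<le> y \<Longrightarrow> \<phi> x - e < (M y - M x) / (y - x)" using l by blast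
  show "eventually (\<lambda>y. \<phi> x - e < (M y - M x) / (y - x)) (at x within {a..b})"
    unfolding eventually_at
  proof (intro exI[of _ "min \<eta>r \<eta>l"] conjI ballI impI)
    show "min \<eta>r \<eta>l > 0" using \<eta>r \<eta>l by simp
    fix y assume y: "y \<in> {a..b}" "y \<noteq> x \<and> dist y x < min \<eta>r \<eta>l"
    show "\<phi> x - e < (M y - M x) / (y - x)"
    proof (cases "x < y")
      case True then show ?thesis using \<eta>r(2)[of y] y by (auto simp: dist_real_def)
    next
      case False then show ?thesis using \<eta>l(2)[of y] y by (auto simp: dist_real_def)
    qed
  qed
qed

lemma inf_sup_eq:
  fixes \<phi> \<psi> :: "'a \<Rightarrow> real"
  assumes A: "\<And>U. U \<in> A \<Longrightarrow> T \<le> \<phi> U" and B: "\<And>V. V \<in> B \<Longrightarrow> \<psi> V \<le> T"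
    and A2: "\<And>e. e > 0 \<Longrightarrow> \<exists>U\<in>A. \<phi> U < T + e" and B2: "\<And>e. e > 0 \<Longrightarrow> \<exists>V\<in>B. T - e < \<psi> V"
  shows "(INF U\<in>A. ereal (\<phi> U)) = ereal T" "(SUP V\<in>B. ereal (\<psi> V)) = ereal T"
proof -
  show "(INF U\<in>A. ereal (\<phi> U)) = ereal T"
  proof (rule antisym)
    show "ereal T \<le> (INF U\<in>A. ereal (\<phi> U))" using A by (intro INF_greatest) auto
    show "(INF U\<in>A. ereal (\<phi> U)) \<le> ereal T"
    proof (rule ereal_le_epsilon2)
      fix e :: real assume e: "e > 0"
      obtain U where U: "U \<in> A" "\<phi> U < T + e" using A2[OF e] by blast
      have "(INF U\<in>A. ereal (\<phi> U)) \<le> ereal (\<phi> U)" using U by (intro INF_lower) auto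
      also have "\<dots> \<le> ereal T + ereal e" using U by simp
      finally show "(INF U\<in>A. ereal (\<phi> U)) \<le> ereal T + ereal e" .
    qed
  qed
  show "(SUP V\<in>B. ereal (\<psi> V)) = ereal T"
  proof (rule antisym)
    show "(SUP V\<in>B. ereal (\<psi> V)) \<le> ereal T" using B by (intro SUP_least) auto
    show "ereal T \<le> (SUP V\<in>B. ereal (\<psi> V))"
    proof (rule ereal_le_epsilon2)
      fix e :: real assume e: "e > 0"
      obtain V where V: "V \<in> B" "T - e < \<psi> V" using B2[OF e] by blast
      have "ereal T \<le> ereal (\<psi> V) + ereal e" using V by simp
      also have "ereal (\<psi> V) \<le> (SUP V\<in>B. ereal (\<psi> V))" using V by (intro SUP_upper) auto
      finally show "ereal T \<le> (SUP V\<in>B. ereal (\<psi> V)) + ereal e" by (simp add: add_right_mono)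
    qed
  qed
qed

lemma laplace_integrable_intro:
  assumes ab: "a < b"
    and A: "\<And>U. laplace_major \<phi> a b U \<Longrightarrow> T \<le> U b - U a"
    and B: "\<And>V. laplace_minor \<phi> a b V \<Longrightarrow> V b - V a \<le> T"
    and A2: "\<And>e. e > 0 \<Longrightarrow> \<exists>U. laplace_major \<phi> a b U \<and> U b - U a < T + e"
    and B2: "\<And>e. e > 0 \<Longrightarrow> \<exists>V. laplace_minor \<phi> a b V \<and> T - e < V b - V a"
  shows "laplace_integrable \<phi> a b" "laplace_integral \<phi> a b = T"
proof -
  have h1: "\<And>U. U \<in> {U. laplace_major \<phi> a b U} \<Longrightarrow> T \<le> U b - U a" using A by auto
  have h2: "\<And>V. V \<in> {V. laplace_minor \<phi> a b V} \<Longrightarrow> V b - V a \<le> T" using B by auto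
  have h3: "\<And>e. e > 0 \<Longrightarrow> \<exists>U\<in>{U. laplace_major \<phi> a b U}. U b - U a < T + e" using A2 by auto
  have h4: "\<And>e. e > 0 \<Longrightarrow> \<exists>V\<in>{V. laplace_minor \<phi> a b V}. T - e < V b - V a" using B2 by auto
  note eq = inf_sup_eq[where \<phi>="\<lambda>U. U b - U a" and \<psi>="\<lambda>V. V b - V a", OF h1 h2 h3 h4]
  show "laplace_integrable \<phi> a b" using eq by (simp add: laplace_integrable_def)
  show "laplace_integral \<phi> a b = T" using eq ab by (simp add: laplace_integral_def)
qed

lemma perron_integrable_intro:
  assumes ab: "a < b"
    and A: "\<And>U. perron_major \<phi> a b U \<Longrightarrow> T \<le> U b - U a"
    and B: "\<And>V. perron_minor \<phi> a b V \<Longrightarrow> V b - V a \<le> T"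
    and A2: "\<And>e. e > 0 \<Longrightarrow> \<exists>U. perron_major \<phi> a b U \<and> U b - U a < T + e"
    and B2: "\<And>e. e > 0 \<Longrightarrow> \<exists>V. perron_minor \<phi> a b V \<and> T - e < V b - V a"
  shows "perron_integrable \<phi> a b" "perron_integral \<phi> a b = T"
proof -
  have h1: "\<And>U. U \<in> {U. perron_major \<phi> a b U} \<Longrightarrow> T \<le> U b - U a" using A by auto
  have h2: "\<And>V. V \<in> {V. perron_minor \<phi> a b V} \<Longrightarrow> V b - V a \<le> T" using B by auto
  have h3: "\<And>e. e > 0 \<Longrightarrow> \<exists>U\<in>{U. perron_major \<phi> a b U}. U b - U a < T + e" using A2 by auto
  have h4: "\<And>e. e > 0 \<Longrightarrow> \<exists>V\<in>{V. perron_minor \<phi> a b V}. T - e < V b - V a" using B2 by auto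
  note eq = inf_sup_eq[where \<phi>="\<lambda>U. U b - U a" and \<psi>="\<lambda>V. V b - V a", OF h1 h2 h3 h4]
  show "perron_integrable \<phi> a b" using eq by (simp add: perron_integrable_def)
  show "perron_integral \<phi> a b = T" using eq ab by (simp add: perron_integral_def)
qed


definition hstep :: "real \<Rightarrow> real \<Rightarrow> nat \<Rightarrow> real" where
  "hstep a b n = (b - a) / real n"

definition ppt :: "real \<Rightarrow> real \<Rightarrow> nat \<Rightarrow> nat \<Rightarrow> real" where
  "ppt a b n i = a + real i * hstep a b n"

definition pl :: "real \<Rightarrow> real \<Rightarrow> nat \<Rightarrow> (nat \<Rightarrow> real) \<Rightarrow> real \<Rightarrow> real" where
  "pl a b n c y = (\<Sum>i<n. c i * max 0 (min (hstep a b n) (y - ppt a b n i)))"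

definition pidx :: "real \<Rightarrow> real \<Rightarrow> nat \<Rightarrow> real \<Rightarrow> nat" where
  "pidx a b n y = min (n - 1) (nat \<lfloor>(y - a) / hstep a b n\<rfloor>)"

context
  fixes a b :: real and n :: nat
  assumes ab: "a < b" and n: "n > 0"
begin

lemma hh_pos: "hstep a b n > 0" using ab n by (simp add: hstep_def)

lemma hh_n: "(b - a) / hstep a b n = real n" using ab n by (simp add: hstep_def)

lemma ppt_Suc: "ppt a b n (Suc i) = ppt a b n i + hstep a b n"
  by (simp add: ppt_def algebra_simps)

lemma ppt_0: "ppt a b n 0 = a" by (simp add: ppt_def)

lemma ppt_n: "ppt a b n n = b" using n by (simp add: ppt_def hstep_def)

lemma ppt_mono: "i \<le> k \<Longrightarrow> ppt a b n i \<le> ppt a b n k"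
  using hh_pos by (simp add: ppt_def mult_right_mono)

lemma ppt_gap: "i < k \<Longrightarrow> ppt a b n i + hstep a b n \<le> ppt a b n k"
  using ppt_mono[of "Suc i" k] by (simp add: ppt_Suc)

lemma ppt_range: "i \<le> n \<Longrightarrow> ppt a b n i \<in> {a..b}"
  using ppt_mono[of 0 i] ppt_mono[of i n] by (simp add: ppt_0 ppt_n)

lemma pl_cont: "continuous_on S (pl a b n c)"
  unfolding pl_def by (intro continuous_intros)

lemma pl_a: "pl a b n c a = 0"
proof -
  have "max 0 (min (hstep a b n) (a - ppt a b n i)) = 0" for i
    using ppt_mono[of 0 i] by (simp add: ppt_0)
  then show ?thesis by (simp add: pl_def)
qed

lemma pl_b: "pl a b n c b = (\<Sum>i<n. c i) * (hstep a b n)"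
proof -
  have "max 0 (min (hstep a b n) (b - ppt a b n i)) = hstep a b n" if "i < n" for i
    using ppt_gap[OF that] hh_pos by (simp add: ppt_n)
  then show ?thesis by (simp add: pl_def sum_distrib_right)
qed

lemma pl_cell:
  assumes j: "j < n" and y: "y \<in> {ppt a b n j..ppt a b n (Suc j)}" and z: "z \<in> {ppt a b n j..ppt a b n (Suc j)}"
  shows "pl a b n c z - pl a b n c y = c j * (z - y)"
proof -
  have trm: "c i * max 0 (min (hstep a b n) (z - ppt a b n i)) - c i * max 0 (min (hstep a b n) (y - ppt a b n i))
      = (if i = j then c j * (z - y) else 0)" if i: "i < n" for i
  proof (cases "i < j")
    case True
    then have "ppt a b n i + hstep a b n \<le> ppt a b n j" by (rule ppt_gap)
    then show ?thesis using True y z by auto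
  next
    case False
    show ?thesis
    proof (cases "i = j")
      case True
      then show ?thesis using y z by (auto simp: ppt_Suc algebra_simps)
    next
      case False': False
      then have "j < i" using False by simp
      then have "ppt a b n (Suc j) \<le> ppt a b n i" by (intro ppt_mono) simp
      then show ?thesis using y z False' by auto
    qed
  qed
  have "pl a b n c z - pl a b n c y = (\<Sum>i<n. c i * max 0 (min (hstep a b n) (z - ppt a b n i)) - c i * max 0 (min (hstep a b n) (y - ppt a b n i)))"
    by (simp add: pl_def sum_subtractf)
  also have "\<dots> = (\<Sum>i<n. if i = j then c j * (z - y) else 0)"
    by (rule sum.cong) (use trm in auto)
  also have "\<dots> = c j * (z - y)" using j by simp
  finally show ?thesis .
qed

lemma cell_right:
  assumes "a \<le> x" "x < b"
  shows "\<exists>j<n. ppt a b n j \<le> x \<and> x < ppt a b n (Suc j)"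
proof -
  define q where "q = (x - a) / hstep a b n"
  have q0: "q \<ge> 0" using assms hh_pos unfolding q_def by (simp add: divide_nonneg_pos)
  have qn: "q < real n"
  proof -
    have "x - a < b - a" using assms by simp
    then have "(x - a) / hstep a b n < (b - a) / hstep a b n" using hh_pos by (simp add: divide_strict_right_mono)
    also have "(b - a) / hstep a b n = real n" by (rule hh_n)
    finally show ?thesis by (simp add: q_def)
  qed
  define j where "j = nat \<lfloor>q\<rfloor>"
  have jq: "real j \<le> q" "q < real j + 1" using q0 by (auto simp: j_def)
  have jn: "j < n" using jq qn by linarith
  have "real j * hstep a b n \<le> x - a" using jq(1) hh_pos by (simp add: q_def le_divide_eq)
  moreover have "x - a < (real j + 1) * hstep a b n" using jq(2) hh_pos by (simp add: q_def divide_less_eq)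
  ultimately show ?thesis using jn by (intro exI[of _ j]) (auto simp: ppt_def algebra_simps)
qed

lemma cell_left:
  assumes "a < x" "x \<le> b"
  shows "\<exists>k<n. ppt a b n k < x \<and> x \<le> ppt a b n (Suc k)"
proof -
  define q where "q = (x - a) / hstep a b n"
  have q0: "q > 0" using assms hh_pos unfolding q_def by (simp add: divide_pos_pos)
  have qn: "q \<le> real n"
  proof -
    have "x - a \<le> b - a" using assms by simp
    then have "(x - a) / hstep a b n \<le> (b - a) / hstep a b n" using hh_pos by (simp add: divide_right_mono)
    also have "(b - a) / hstep a b n = real n" by (rule hh_n)
    finally show ?thesis by (simp add: q_def)
  qed
  define k where "k = nat \<lceil>q\<rceil> - 1"
  have c1: "\<lceil>q\<rceil> \<ge> 1" using q0 by (simp add: le_ceiling_iff)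
  have k_eq: "real k = real_of_int \<lceil>q\<rceil> - 1"
  proof -
    have "nat \<lceil>q\<rceil> \<ge> 1" using c1 by linarith
    then have "real (nat \<lceil>q\<rceil> - 1) = real (nat \<lceil>q\<rceil>) - 1" by (simp add: of_nat_diff)
    also have "real (nat \<lceil>q\<rceil>) = real_of_int \<lceil>q\<rceil>" using c1 by simp
    finally show ?thesis by (simp add: k_def)
  qed
  have kq: "real k < q" "q \<le> real k + 1"
    using ceiling_correct[of q] unfolding k_eq by auto
  have kn: "k < n" using kq qn by linarith
  have "real k * hstep a b n < x - a" using kq(1) hh_pos by (simp add: q_def less_divide_eq)
  moreover have "x - a \<le> (real k + 1) * hstep a b n" using kq(2) hh_pos by (simp add: q_def divide_le_eq)
  ultimately show ?thesis using kn by (intro exI[of _ k]) (auto simp: ppt_def algebra_simps)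
qed

lemma pidx_cell:
  assumes "y \<in> {a..b}"
  shows "pidx a b n y < n" "y \<in> {ppt a b n (pidx a b n y)..ppt a b n (Suc (pidx a b n y))}"
proof -
  show "pidx a b n y < n" using n by (simp add: pidx_def)
  show "y \<in> {ppt a b n (pidx a b n y)..ppt a b n (Suc (pidx a b n y))}"
  proof (cases "y = b")
    case True
    have "pidx a b n b = n - 1"
    proof -
      have "(b - a) / hstep a b n = real n" by (rule hh_n)
      then have "nat \<lfloor>(b - a) / hstep a b n\<rfloor> = n" by simp
      then show ?thesis by (simp add: pidx_def)
    qed
    moreover have "ppt a b n (n - 1) \<le> b" using ppt_mono[of "n - 1" n] by (simp add: ppt_n)
    moreover have "Suc (n - 1) = n" using n by simp
    ultimately show ?thesis using True by (simp add: ppt_n)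
  next
    case False
    then have "a \<le> y" "y < b" using assms by auto
    from cell_right[OF this] obtain j where j: "j < n" "ppt a b n j \<le> y" "y < ppt a b n (Suc j)" by blast
    have "nat \<lfloor>(y - a) / hstep a b n\<rfloor> = j"
    proof -
      have "real j * hstep a b n \<le> y - a" "y - a < (real j + 1) * hstep a b n"
        using j by (auto simp: ppt_def algebra_simps)
      then have "real j \<le> (y - a) / hstep a b n" "(y - a) / hstep a b n < real j + 1"
        using hh_pos by (auto simp: le_divide_eq divide_less_eq)
      then have "\<lfloor>(y - a) / hstep a b n\<rfloor> = int j" by (intro floor_unique) auto
      then show ?thesis by simp
    qed
    then have "pidx a b n y = j" using j(1) by (simp add: pidx_def)
    then show ?thesis using j by auto
  qed
qed

lemma pidx_open:
  assumes j: "j < n" and y: "ppt a b n j < y" "y < ppt a b n (Suc j)"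
  shows "pidx a b n y = j"
proof -
  have "real j * hstep a b n < y - a" "y - a < (real j + 1) * hstep a b n"
    using y by (auto simp: ppt_def algebra_simps)
  then have "real j \<le> (y - a) / hstep a b n" "(y - a) / hstep a b n < real j + 1"
    using hh_pos by (auto simp: less_divide_eq divide_less_eq le_divide_eq)
  then have "\<lfloor>(y - a) / hstep a b n\<rfloor> = int j" by (intro floor_unique) auto
  then show ?thesis using j by (simp add: pidx_def)
qed

lemma pl_step_integral:
  "((\<lambda>y. c (pidx a b n y)) has_integral (pl a b n c b - pl a b n c a)) {a..b}"
proof (rule fundamental_theorem_of_calculus_interior_strong[where S = "ppt a b n ` {..n}"])
  show "finite (ppt a b n ` {..n})" by simp
  show "a \<le> b" using ab by simp
  show "continuous_on {a..b} (pl a b n c)" by (rule pl_cont)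
  fix y assume y: "y \<in> {a<..<b} - ppt a b n ` {..n}"
  then have "a \<le> y" "y < b" by auto
  from cell_right[OF this] obtain j where j: "j < n" "ppt a b n j \<le> y" "y < ppt a b n (Suc j)" by blast
  have "y \<noteq> ppt a b n j" using y j by auto
  then have j2: "ppt a b n j < y" using j by simp
  have idx: "pidx a b n y = j" by (rule pidx_open[OF j(1) j2 j(3)])
  have "((\<lambda>z. pl a b n c y + c j * (z - y)) has_field_derivative c j) (at y)"
    by (auto intro!: derivative_eq_intros)
  then have "(pl a b n c has_field_derivative c j) (at y)"
  proof (rule has_field_derivative_transform_within_open[where S = "{ppt a b n j<..<ppt a b n (Suc j)}"])
    show "open {ppt a b n j<..<ppt a b n (Suc j)}" by simp
    show "y \<in> {ppt a b n j<..<ppt a b n (Suc j)}" using j2 j by simp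
    fix z assume "z \<in> {ppt a b n j<..<ppt a b n (Suc j)}"
    then show "pl a b n c y + c j * (z - y) = pl a b n c z"
      using pl_cell[OF j(1), of y z c] j j2 by auto
  qed
  then show "(pl a b n c has_vector_derivative c (pidx a b n y)) (at y)"
    by (simp add: idx has_real_derivative_iff_has_vector_derivative)
qed

lemma pl_local:
  assumes up: "\<And>j y. j < n \<Longrightarrow> y \<in> {ppt a b n j..ppt a b n (Suc j)} \<Longrightarrow> \<phi> y \<le> c j"
  shows "\<And>x. x \<in> {a..<b} \<Longrightarrow> \<exists>\<eta>>0. \<exists>m. \<phi> x \<le> m \<and> (\<forall>t\<in>{0..\<eta>}. pl a b n c (x + t) - pl a b n c x = m * t)"
    and "\<And>x. x \<in> {a<..b} \<Longrightarrow> \<exists>\<eta>>0. \<exists>m. \<phi> x \<le> m \<and> (\<forall>t\<in>{0..\<eta>}. pl a b n c (x - t) - pl a b n c x = - (m * t))"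
proof -
  fix x assume x: "x \<in> {a..<b}"
  then obtain j where j: "j < n" "ppt a b n j \<le> x" "x < ppt a b n (Suc j)" using cell_right by auto
  show "\<exists>\<eta>>0. \<exists>m. \<phi> x \<le> m \<and> (\<forall>t\<in>{0..\<eta>}. pl a b n c (x + t) - pl a b n c x = m * t)"
  proof (intro exI conjI ballI)
    show "ppt a b n (Suc j) - x > 0" using j by simp
    show "\<phi> x \<le> c j" using up[OF j(1)] j by auto
    fix t assume t: "t \<in> {0..ppt a b n (Suc j) - x}"
    show "pl a b n c (x + t) - pl a b n c x = c j * t"
      using pl_cell[OF j(1), of x "x + t" c] j t by auto
  qed
next
  fix x assume x: "x \<in> {a<..b}"
  then obtain k where k: "k < n" "ppt a b n k < x" "x \<le> ppt a b n (Suc k)" using cell_left by auto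
  show "\<exists>\<eta>>0. \<exists>m. \<phi> x \<le> m \<and> (\<forall>t\<in>{0..\<eta>}. pl a b n c (x - t) - pl a b n c x = - (m * t))"
  proof (intro exI conjI ballI)
    show "x - ppt a b n k > 0" using k by simp
    show "\<phi> x \<le> c k" using up[OF k(1)] k by auto
    fix t assume t: "t \<in> {0..x - ppt a b n k}"
    show "pl a b n c (x - t) - pl a b n c x = - (c k * t)"
      using pl_cell[OF k(1), of x "x - t" c] k t by auto
  qed
qed

lemma pl_neg: "pl a b n (\<lambda>i. - c i) y = - pl a b n c y"
  by (simp add: pl_def sum_negf)

end


definition dsup :: "(real \<Rightarrow> real) \<Rightarrow> real \<Rightarrow> real \<Rightarrow> nat \<Rightarrow> nat \<Rightarrow> real" where
  "dsup \<phi> a b n i = Sup (\<phi> ` {ppt a b n i..ppt a b n (Suc i)})"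

definition dinf :: "(real \<Rightarrow> real) \<Rightarrow> real \<Rightarrow> real \<Rightarrow> nat \<Rightarrow> nat \<Rightarrow> real" where
  "dinf \<phi> a b n i = Inf (\<phi> ` {ppt a b n i..ppt a b n (Suc i)})"

lemma darboux_bounds:
  assumes ab: "a < b" and n: "n > 0" and bnd: "\<And>y. y \<in> {a..b} \<Longrightarrow> \<bar>\<phi> y\<bar> \<le> B"
    and j: "j < n" and y: "y \<in> {ppt a b n j..ppt a b n (Suc j)}"
  shows "dinf \<phi> a b n j \<le> \<phi> y" "\<phi> y \<le> dsup \<phi> a b n j"
proof -
  have sub: "{ppt a b n j..ppt a b n (Suc j)} \<subseteq> {a..b}"
    using ppt_range[OF ab n, of j] ppt_range[OF ab n, of "Suc j"] j by auto
  have ba: "bdd_above (\<phi> ` {ppt a b n j..ppt a b n (Suc j)})"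
  proof (rule bdd_aboveI2)
    fix x assume "x \<in> {ppt a b n j..ppt a b n (Suc j)}"
    then have "\<bar>\<phi> x\<bar> \<le> B" using bnd sub by auto
    then show "\<phi> x \<le> B" by simp
  qed
  have bb: "bdd_below (\<phi> ` {ppt a b n j..ppt a b n (Suc j)})"
  proof (rule bdd_belowI2)
    fix x assume "x \<in> {ppt a b n j..ppt a b n (Suc j)}"
    then have "\<bar>\<phi> x\<bar> \<le> B" using bnd sub by auto
    then show "- B \<le> \<phi> x" by simp
  qed
  show "dinf \<phi> a b n j \<le> \<phi> y" unfolding dinf_def using y bb by (intro cInf_lower) auto
  show "\<phi> y \<le> dsup \<phi> a b n j" unfolding dsup_def using y ba by (intro cSup_upper) auto
qed

lemma darboux_integral:
  assumes ab: "a < b" and bnd: "\<And>y. y \<in> {a..b} \<Longrightarrow> \<bar>\<phi> y\<bar> \<le> B"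
    and osc: "\<And>e. e > 0 \<Longrightarrow> \<exists>n>0. (\<Sum>i<n. dsup \<phi> a b n i - dinf \<phi> a b n i) * hstep a b n < e"
  shows "\<phi> integrable_on {a..b}" "laplace_integrable \<phi> a b" "laplace_integral \<phi> a b = integral {a..b} \<phi>"
    "perron_integrable \<phi> a b" "perron_integral \<phi> a b = integral {a..b} \<phi>"
proof -
  define SU where "SU n = (\<Sum>i<n. dsup \<phi> a b n i) * hstep a b n" for n
  define SL where "SL n = (\<Sum>i<n. dinf \<phi> a b n i) * hstep a b n" for n
  have diff: "SU n - SL n = (\<Sum>i<n. dsup \<phi> a b n i - dinf \<phi> a b n i) * hstep a b n" for n
    by (simp add: SU_def SL_def sum_subtractf left_diff_distrib)
  have up: "\<phi> y \<le> dsup \<phi> a b n j"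
    and lo: "- \<phi> y \<le> - dinf \<phi> a b n j"
    if n: "n > 0" and "j < n" "y \<in> {ppt a b n j..ppt a b n (Suc j)}" for n j y
    using darboux_bounds[of a b n \<phi> B j y] ab bnd that by auto
  have intU: "((\<lambda>y. dsup \<phi> a b n (pidx a b n y)) has_integral SU n) {a..b}"
   and intL: "((\<lambda>y. dinf \<phi> a b n (pidx a b n y)) has_integral SL n) {a..b}" if n: "n > 0" for n
    using pl_step_integral[OF ab n, of "dsup \<phi> a b n"] pl_step_integral[OF ab n, of "dinf \<phi> a b n"]
    by (simp_all add: pl_a[OF ab n] pl_b[OF ab n] SU_def SL_def)
  have stepU: "\<phi> y \<le> dsup \<phi> a b n (pidx a b n y)" and stepL: "dinf \<phi> a b n (pidx a b n y) \<le> \<phi> y"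
    if n: "n > 0" and y: "y \<in> {a..b}" for n y
    using darboux_bounds[OF ab n bnd pidx_cell[OF ab n y]] by auto
  show int: "\<phi> integrable_on {a..b}"
    unfolding box_real(2)[symmetric]
  proof (rule integrable_straddle_interval)
    fix e :: real assume e: "e > 0"
    obtain n where n: "n > 0" "(\<Sum>i<n. dsup \<phi> a b n i - dinf \<phi> a b n i) * hstep a b n < e" using osc[OF e] by blast
    have "SL n \<le> SU n" using has_integral_le[OF intL[OF n(1)] intU[OF n(1)]] stepU[OF n(1)] stepL[OF n(1)]
      by (meson order_trans)
    then have "\<bar>SL n - SU n\<bar> < e" using n(2) diff[of n] by simp
    then show "\<exists>g h i j. (g has_integral i) (cbox a b) \<and> (h has_integral j) (cbox a b) \<and> \<bar>i - j\<bar> < e \<and> (\<forall>x\<in>cbox a b. g x \<le> \<phi> x \<and> \<phi> x \<le> h x)"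
      using intL[OF n(1)] intU[OF n(1)] stepU[OF n(1)] stepL[OF n(1)] unfolding box_real(2) by blast
  qed
  define I where "I = integral {a..b} \<phi>"
  have I: "(\<phi> has_integral I) {a..b}" using int by (simp add: I_def integrable_integral)
  have IU: "I \<le> SU n" and IL: "SL n \<le> I" if n: "n > 0" for n
    using has_integral_le[OF I intU[OF n]] has_integral_le[OF intL[OF n] I] stepU[OF n] stepL[OF n] by auto
  have plU: "pl a b n (dsup \<phi> a b n) b - pl a b n (dsup \<phi> a b n) a = SU n"
   and plL: "pl a b n (dinf \<phi> a b n) b - pl a b n (dinf \<phi> a b n) a = SL n" if n: "n > 0" for n
    by (simp_all add: pl_a[OF ab n] pl_b[OF ab n] SU_def SL_def)
  have negpl: "(\<lambda>x. - pl a b n (dinf \<phi> a b n) x) = pl a b n (\<lambda>i. - dinf \<phi> a b n i)" if n: "n > 0" for n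
    using pl_neg[OF ab n] by auto
  have lmajU: "lmaj \<phi> a b (pl a b n (dsup \<phi> a b n))" and lminL: "lmaj (\<lambda>x. - \<phi> x) a b (\<lambda>x. - pl a b n (dinf \<phi> a b n) x)"
    and pmajU: "pmaj \<phi> a b (pl a b n (dsup \<phi> a b n))" and pminL: "pmaj (\<lambda>x. - \<phi> x) a b (\<lambda>x. - pl a b n (dinf \<phi> a b n) x)"
    if n: "n > 0" for n
  proof -
    show "lmaj \<phi> a b (pl a b n (dsup \<phi> a b n))"
      using lmaj_of_local_linear[OF ab pl_cont[OF ab n] pl_local[OF ab n up[OF n]]] .
    show "pmaj \<phi> a b (pl a b n (dsup \<phi> a b n))"
      using pmaj_of_local_linear[OF ab pl_cont[OF ab n] pl_local[OF ab n up[OF n]]] .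
    show "lmaj (\<lambda>x. - \<phi> x) a b (\<lambda>x. - pl a b n (dinf \<phi> a b n) x)"
      unfolding negpl[OF n]
      using lmaj_of_local_linear[OF ab pl_cont[OF ab n] pl_local[OF ab n lo[OF n]]] .
    show "pmaj (\<lambda>x. - \<phi> x) a b (\<lambda>x. - pl a b n (dinf \<phi> a b n) x)"
      unfolding negpl[OF n]
      using pmaj_of_local_linear[OF ab pl_cont[OF ab n] pl_local[OF ab n lo[OF n]]] .
  qed
  have lmajorU: "laplace_major \<phi> a b (pl a b n (dsup \<phi> a b n))" and lminorL: "laplace_minor \<phi> a b (pl a b n (dinf \<phi> a b n))"
    and pmajorU: "perron_major \<phi> a b (pl a b n (dsup \<phi> a b n))" and pminorL: "perron_minor \<phi> a b (pl a b n (dinf \<phi> a b n))"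
    if n: "n > 0" for n
    using lmajU[OF n] lminL[OF n] pmajU[OF n] pminL[OF n]
    by (simp_all add: lmaj_iff[OF ab] lmin_iff[OF ab] pmaj_iff pmin_iff)
  have close: "\<exists>n>0. SU n < SL n + e" if e: "e > 0" for e
  proof -
    obtain n where n: "n > 0" "(\<Sum>i<n. dsup \<phi> a b n i - dinf \<phi> a b n i) * hstep a b n < e" using osc[OF e] by blast
    then have "SU n < SL n + e" using diff[of n] by linarith
    then show ?thesis using n(1) by blast
  qed
  show "laplace_integrable \<phi> a b" "laplace_integral \<phi> a b = integral {a..b} \<phi>"
  proof -
    have A: "I \<le> U b - U a" if U: "laplace_major \<phi> a b U" for U
    proof (rule field_le_epsilon)
      fix e :: real assume e: "e > 0"
      obtain n where n: "n > 0" "SU n < SL n + e" using close[OF e] by blast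
      have "SL n \<le> U b - U a"
        using lmaj_minor_mono[of \<phi> a b U "pl a b n (dinf \<phi> a b n)" a b] U lminL[OF n(1)] plL[OF n(1)] ab
        by (simp add: lmaj_iff[OF ab])
      then show "I \<le> U b - U a + e" using IU[OF n(1)] n by simp
    qed
    have B: "V b - V a \<le> I" if V: "laplace_minor \<phi> a b V" for V
    proof (rule field_le_epsilon)
      fix e :: real assume e: "e > 0"
      obtain n where n: "n > 0" "SU n < SL n + e" using close[OF e] by blast
      have "V b - V a \<le> SU n"
        using lmaj_minor_mono[of \<phi> a b "pl a b n (dsup \<phi> a b n)" V a b] V lmajU[OF n(1)] plU[OF n(1)] ab
        by (simp add: lmin_iff[OF ab])
      then show "V b - V a \<le> I + e" using IL[OF n(1)] n by simp
    qed
    have A2: "\<exists>U. laplace_major \<phi> a b U \<and> U b - U a < I + e" if e: "e > 0" for e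
    proof -
      obtain n where n: "n > 0" "SU n < SL n + e" using close[OF e] by blast
      have "pl a b n (dsup \<phi> a b n) b - pl a b n (dsup \<phi> a b n) a < I + e" using plU[OF n(1)] IL[OF n(1)] n(2) by linarith
      then show ?thesis using lmajorU[OF n(1)] by blast
    qed
    have B2: "\<exists>V. laplace_minor \<phi> a b V \<and> I - e < V b - V a" if e: "e > 0" for e
    proof -
      obtain n where n: "n > 0" "SU n < SL n + e" using close[OF e] by blast
      have "I - e < pl a b n (dinf \<phi> a b n) b - pl a b n (dinf \<phi> a b n) a" using plL[OF n(1)] IU[OF n(1)] n(2) by linarith
      then show ?thesis using lminorL[OF n(1)] by blast
    qed
    show "laplace_integrable \<phi> a b" "laplace_integral \<phi> a b = integral {a..b} \<phi>"
      using laplace_integrable_intro[OF ab A B A2 B2] by (simp_all add: I_def)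
  qed
  show "perron_integrable \<phi> a b" "perron_integral \<phi> a b = integral {a..b} \<phi>"
  proof -
    have A: "I \<le> U b - U a" if U: "perron_major \<phi> a b U" for U
    proof (rule field_le_epsilon)
      fix e :: real assume e: "e > 0"
      obtain n where n: "n > 0" "SU n < SL n + e" using close[OF e] by blast
      have "SL n \<le> U b - U a"
        using pmaj_minor_mono[of \<phi> a b U "pl a b n (dinf \<phi> a b n)" a b] U pminL[OF n(1)] plL[OF n(1)] ab
        by (simp add: pmaj_iff)
      then show "I \<le> U b - U a + e" using IU[OF n(1)] n by simp
    qed
    have B: "V b - V a \<le> I" if V: "perron_minor \<phi> a b V" for V
    proof (rule field_le_epsilon)
      fix e :: real assume e: "e > 0"
      obtain n where n: "n > 0" "SU n < SL n + e" using close[OF e] by blast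
      have "V b - V a \<le> SU n"
        using pmaj_minor_mono[of \<phi> a b "pl a b n (dsup \<phi> a b n)" V a b] V pmajU[OF n(1)] plU[OF n(1)] ab
        by (simp add: pmin_iff)
      then show "V b - V a \<le> I + e" using IL[OF n(1)] n by simp
    qed
    have A2: "\<exists>U. perron_major \<phi> a b U \<and> U b - U a < I + e" if e: "e > 0" for e
    proof -
      obtain n where n: "n > 0" "SU n < SL n + e" using close[OF e] by blast
      have "pl a b n (dsup \<phi> a b n) b - pl a b n (dsup \<phi> a b n) a < I + e" using plU[OF n(1)] IL[OF n(1)] n(2) by linarith
      then show ?thesis using pmajorU[OF n(1)] by blast
    qed
    have B2: "\<exists>V. perron_minor \<phi> a b V \<and> I - e < V b - V a" if e: "e > 0" for e
    proof -
      obtain n where n: "n > 0" "SU n < SL n + e" using close[OF e] by blast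
      have "I - e < pl a b n (dinf \<phi> a b n) b - pl a b n (dinf \<phi> a b n) a" using plL[OF n(1)] IU[OF n(1)] n(2) by linarith
      then show ?thesis using pminorL[OF n(1)] by blast
    qed
    show "perron_integrable \<phi> a b" "perron_integral \<phi> a b = integral {a..b} \<phi>"
      using perron_integrable_intro[OF ab A B A2 B2] by (simp_all add: I_def)
  qed
qed


definition lsum :: "(real \<Rightarrow> real) \<Rightarrow> real list \<Rightarrow> real" where
  "lsum g xs = (\<Sum>i<length xs - 1. \<bar>g (xs ! Suc i) - g (xs ! i)\<bar>)"

definition pvar :: "(real \<Rightarrow> real) \<Rightarrow> real \<Rightarrow> real \<Rightarrow> real" where
  "pvar g a y = Sup (lsum g ` {xs. sorted xs \<and> set xs \<subseteq> {a..y}})"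

lemma lsum_snoc:
  "lsum g (xs @ [u]) = lsum g xs + (if xs = [] then 0 else \<bar>g u - g (last xs)\<bar>)"
proof (cases xs rule: rev_cases)
  case Nil then show ?thesis by (simp add: lsum_def)
next
  case (snoc ys y)
  have "lsum g (ys @ [y] @ [u]) = (\<Sum>i<Suc (length ys). \<bar>g ((ys @ [y, u]) ! Suc i) - g ((ys @ [y, u]) ! i)\<bar>)"
    by (simp add: lsum_def)
  also have "\<dots> = (\<Sum>i<length ys. \<bar>g ((ys @ [y, u]) ! Suc i) - g ((ys @ [y, u]) ! i)\<bar>) + \<bar>g u - g y\<bar>"
    by (simp add: nth_append)
  also have "(\<Sum>i<length ys. \<bar>g ((ys @ [y, u]) ! Suc i) - g ((ys @ [y, u]) ! i)\<bar>)
      = (\<Sum>i<length ys. \<bar>g ((ys @ [y]) ! Suc i) - g ((ys @ [y]) ! i)\<bar>)"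
    by (rule sum.cong) (auto simp: nth_append)
  also have "\<dots> = lsum g (ys @ [y])" by (simp add: lsum_def)
  finally show ?thesis using snoc by simp
qed

lemma lsum_snoc_ge: "lsum g xs \<le> lsum g (xs @ [u])"
  by (simp add: lsum_snoc)

context
  fixes g :: "real \<Rightarrow> real" and a b M :: real
  assumes M: "\<And>xs. sorted xs \<Longrightarrow> set xs \<subseteq> {a..b} \<Longrightarrow> lsum g xs \<le> M"
begin

lemma pvar_bdd: "y \<le> b \<Longrightarrow> bdd_above (lsum g ` {xs. sorted xs \<and> set xs \<subseteq> {a..y}})"
proof -
  assume y: "y \<le> b"
  show ?thesis
  proof (rule bdd_aboveI2)
    fix xs assume "xs \<in> {xs. sorted xs \<and> set xs \<subseteq> {a..y}}"
    then show "lsum g xs \<le> M" using M y by force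
  qed
qed

lemma pvar_ne: "{xs. sorted xs \<and> set xs \<subseteq> {a..y}} \<noteq> {}"
proof -
  have "[] \<in> {xs. sorted xs \<and> set xs \<subseteq> {a..y}}" by simp
  then show ?thesis by blast
qed

lemma pvar_ge: "y \<le> b \<Longrightarrow> sorted xs \<Longrightarrow> set xs \<subseteq> {a..y} \<Longrightarrow> lsum g xs \<le> pvar g a y"
  unfolding pvar_def by (rule cSUP_upper[OF _ pvar_bdd]) auto

lemma pvar_le_M: "y \<le> b \<Longrightarrow> pvar g a y \<le> M"
  unfolding pvar_def using M by (intro cSUP_least[OF pvar_ne]) fastforce

lemma pvar_nonneg: "y \<le> b \<Longrightarrow> 0 \<le> pvar g a y"
  using pvar_ge[of y "[]"] by (simp add: lsum_def)

lemma pvar_step: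
  assumes "a \<le> y" "y \<le> z" "z \<le> b"
  shows "pvar g a y + \<bar>g z - g y\<bar> \<le> pvar g a z"
proof -
  have "lsum g xs \<le> pvar g a z - \<bar>g z - g y\<bar>" if xs: "sorted xs" "set xs \<subseteq> {a..y}" for xs
  proof -
    have s: "sorted ((xs @ [y]) @ [z])" using xs assms by (auto simp: sorted_append)
    have st: "set ((xs @ [y]) @ [z]) \<subseteq> {a..z}" using xs assms by auto
    have "lsum g ((xs @ [y]) @ [z]) = lsum g (xs @ [y]) + \<bar>g z - g y\<bar>" using lsum_snoc[of g "xs @ [y]" z] by simp
    moreover have "lsum g xs \<le> lsum g (xs @ [y])" by (rule lsum_snoc_ge)
    moreover have "lsum g ((xs @ [y]) @ [z]) \<le> pvar g a z" by (rule pvar_ge[OF assms(3) s st])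
    ultimately show ?thesis by linarith
  qed
  then have "pvar g a y \<le> pvar g a z - \<bar>g z - g y\<bar>"
    unfolding pvar_def[of g a y] by (intro cSUP_least[OF pvar_ne]) auto
  then show ?thesis by simp
qed

lemma pvar_mono: "a \<le> y \<Longrightarrow> y \<le> z \<Longrightarrow> z \<le> b \<Longrightarrow> pvar g a y \<le> pvar g a z"
  using pvar_step[of y z] by simp

lemma g_diff_le: "a \<le> y \<Longrightarrow> y \<le> z \<Longrightarrow> z \<le> b \<Longrightarrow> \<bar>g z - g y\<bar> \<le> pvar g a z - pvar g a y"
  using pvar_step[of y z] by simp

lemma g_bounded: "y \<in> {a..b} \<Longrightarrow> \<bar>g y\<bar> \<le> \<bar>g a\<bar> + M"
proof -
  assume y: "y \<in> {a..b}"
  have "\<bar>g y - g a\<bar> \<le> pvar g a y - pvar g a a" using g_diff_le[of a y] y by auto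
  also have "\<dots> \<le> M" using pvar_le_M[of y] pvar_nonneg[of a] y by auto
  finally show ?thesis by linarith
qed

lemma g_right_limit:
  assumes x: "a \<le> x" "x < b"
  shows "\<exists>L. (g \<longlongrightarrow> L) (at_right x)"
proof -
  define P where "P = pvar g a"
  define Q where "Q y = pvar g a y - g y" for y
  have Pm: "\<And>u v. u \<in> {a..b} \<Longrightarrow> v \<in> {a..b} \<Longrightarrow> x < u \<Longrightarrow> u \<le> v \<Longrightarrow> P u \<le> P v"
    unfolding P_def using pvar_mono by auto
  have Qm: "\<And>u v. u \<in> {a..b} \<Longrightarrow> v \<in> {a..b} \<Longrightarrow> x < u \<Longrightarrow> u \<le> v \<Longrightarrow> Q u \<le> Q v"
    unfolding Q_def using g_diff_le by (smt (verit, ccfv_SIG) atLeastAtMost_iff)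
  have Pb: "\<And>u. u \<in> {a..b} \<Longrightarrow> x < u \<Longrightarrow> P x \<le> P u" unfolding P_def using pvar_mono x by auto
  have Qb: "\<And>u. u \<in> {a..b} \<Longrightarrow> x < u \<Longrightarrow> Q x \<le> Q u"
    unfolding Q_def using g_diff_le x by (smt (verit, ccfv_SIG) atLeastAtMost_iff)
  have F: "at x within ({x<..} \<inter> {a..b}) = at_right x"
    by (rule at_within_nhd[of _ "{..<b}"]) (use x in auto)
  have "(P \<longlongrightarrow> Inf (P ` ({x<..} \<inter> {a..b}))) (at_right x)"
    using Lim_right_bound[of "{a..b}" x P "P x", OF Pm Pb] F by simp
  moreover have "(Q \<longlongrightarrow> Inf (Q ` ({x<..} \<inter> {a..b}))) (at_right x)"
    using Lim_right_bound[of "{a..b}" x Q "Q x", OF Qm Qb] F by simp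
  ultimately have "((\<lambda>y. P y - Q y) \<longlongrightarrow> Inf (P ` ({x<..} \<inter> {a..b})) - Inf (Q ` ({x<..} \<inter> {a..b}))) (at_right x)"
    by (rule tendsto_diff)
  moreover have "(\<lambda>y. P y - Q y) = g" by (rule ext) (simp add: P_def Q_def)
  ultimately show ?thesis by auto
qed

lemma g_left_limit:
  assumes x: "a < x" "x \<le> b"
  shows "\<exists>L. (g \<longlongrightarrow> L) (at_left x)"
proof -
  define P where "P = pvar g a"
  define Q where "Q y = pvar g a y - g y" for y
  have Pm: "\<And>u v. u \<in> {a..b} \<Longrightarrow> v \<in> {a..b} \<Longrightarrow> v < x \<Longrightarrow> u \<le> v \<Longrightarrow> P u \<le> P v"
    unfolding P_def using pvar_mono by auto
  have Qm: "\<And>u v. u \<in> {a..b} \<Longrightarrow> v \<in> {a..b} \<Longrightarrow> v < x \<Longrightarrow> u \<le> v \<Longrightarrow> Q u \<le> Q v"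
    unfolding Q_def using g_diff_le by (smt (verit, ccfv_SIG) atLeastAtMost_iff)
  have Pb: "\<And>u. u \<in> {a..b} \<Longrightarrow> u < x \<Longrightarrow> P u \<le> P x" unfolding P_def using pvar_mono x by auto
  have Qb: "\<And>u. u \<in> {a..b} \<Longrightarrow> u < x \<Longrightarrow> Q u \<le> Q x"
    unfolding Q_def using g_diff_le x by (smt (verit, ccfv_SIG) atLeastAtMost_iff)
  have F: "at x within ({..<x} \<inter> {a..b}) = at_left x"
    by (rule at_within_nhd[of _ "{a<..}"]) (use x in auto)
  have "(P \<longlongrightarrow> Sup (P ` ({..<x} \<inter> {a..b}))) (at_left x)"
    using Lim_left_bound[of "{a..b}" x P "P x", OF Pm Pb] F by simp
  moreover have "(Q \<longlongrightarrow> Sup (Q ` ({..<x} \<inter> {a..b}))) (at_left x)"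
    using Lim_left_bound[of "{a..b}" x Q "Q x", OF Qm Qb] F by simp
  ultimately have "((\<lambda>y. P y - Q y) \<longlongrightarrow> Sup (P ` ({..<x} \<inter> {a..b})) - Sup (Q ` ({..<x} \<inter> {a..b}))) (at_left x)"
    by (rule tendsto_diff)
  moreover have "(\<lambda>y. P y - Q y) = g" by (rule ext) (simp add: P_def Q_def)
  ultimately show ?thesis by auto
qed

end


lemma dsup_dinf_le:
  assumes ab: "a < b" and n: "n > 0" and bnd: "\<And>y. y \<in> {a..b} \<Longrightarrow> \<bar>\<phi> y\<bar> \<le> B" and i: "i < n"
    and D: "\<And>y z. y \<in> {ppt a b n i..ppt a b n (Suc i)} \<Longrightarrow> z \<in> {ppt a b n i..ppt a b n (Suc i)} \<Longrightarrow> \<phi> y - \<phi> z \<le> D"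
  shows "dsup \<phi> a b n i - dinf \<phi> a b n i \<le> D"
proof -
  let ?C = "{ppt a b n i..ppt a b n (Suc i)}"
  have ne: "?C \<noteq> {}" using ppt_mono[OF ab n, of i "Suc i"] by auto
  have "\<phi> y - D \<le> dinf \<phi> a b n i" if y: "y \<in> ?C" for y
    unfolding dinf_def
  proof (rule cInf_greatest)
    show "\<phi> ` ?C \<noteq> {}" using ne by simp
    fix w assume "w \<in> \<phi> ` ?C"
    then obtain z where z: "z \<in> ?C" "w = \<phi> z" by blast
    then show "\<phi> y - D \<le> w" using D[OF y z(1)] by simp
  qed
  then have "\<phi> y \<le> dinf \<phi> a b n i + D" if y: "y \<in> ?C" for y using y by force
  then have "dsup \<phi> a b n i \<le> dinf \<phi> a b n i + D"
    unfolding dsup_def using ne by (intro cSup_least) auto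
  then show ?thesis by simp
qed

lemma prod_osc:
  fixes g F :: "real \<Rightarrow> real" and a b c M :: real
  assumes M: "\<And>xs. sorted xs \<Longrightarrow> set xs \<subseteq> {a..b} \<Longrightarrow> lsum g xs \<le> M"
    and ac: "a < c" "c \<le> b" and Fc: "continuous_on {a..c} F"
  shows "\<exists>B. \<forall>y\<in>{a..c}. \<bar>F y * g y\<bar> \<le> B"
    and "\<And>e. e > 0 \<Longrightarrow> \<exists>n>0. (\<Sum>i<n. dsup (\<lambda>y. F y * g y) a c n i - dinf (\<lambda>y. F y * g y) a c n i) * hstep a c n < e"
proof -
  define Bg where "Bg = \<bar>g a\<bar> + M"
  have gb: "\<bar>g y\<bar> \<le> Bg" if "y \<in> {a..c}" for y
  proof -
    have "y \<in> {a..b}" using that ac by auto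
    from g_bounded[OF M this] show ?thesis by (simp add: Bg_def)
  qed
  have M0: "M \<ge> 0" using M[of "[]"] by (simp add: lsum_def)
  have Bg0: "Bg \<ge> 0" using M0 by (simp add: Bg_def)
  obtain BF0 where BF0: "\<And>y. y \<in> {a..c} \<Longrightarrow> \<bar>F y\<bar> \<le> BF0"
    using compact_imp_bounded[OF compact_continuous_image[OF Fc compact_Icc]]
    unfolding bounded_iff by (metis image_eqI real_norm_def)
  define BF where "BF = max BF0 0"
  have BF: "\<And>y. y \<in> {a..c} \<Longrightarrow> \<bar>F y\<bar> \<le> BF" "BF \<ge> 0" using BF0 by (auto simp: BF_def intro: le_max_iff_disj[THEN iffD2])
  show "\<exists>B. \<forall>y\<in>{a..c}. \<bar>F y * g y\<bar> \<le> B"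
  proof (intro exI ballI)
    fix y assume y: "y \<in> {a..c}"
    show "\<bar>F y * g y\<bar> \<le> BF * Bg" unfolding abs_mult using BF gb[OF y] y by (intro mult_mono) auto
  qed
  fix e :: real assume e: "e > 0"
  define e1 where "e1 = e / (2 * (Bg + 1)) / (c - a)"
  have e1: "e1 > 0" using e ac Bg0 by (simp add: e1_def)
  have uc: "uniformly_continuous_on {a..c} F" by (rule compact_uniformly_continuous[OF Fc compact_Icc])
  obtain \<delta> where \<delta>: "\<delta> > 0" "\<And>y z. y \<in> {a..c} \<Longrightarrow> z \<in> {a..c} \<Longrightarrow> dist z y < \<delta> \<Longrightarrow> dist (F z) (F y) < e1"
    using uc e1 unfolding uniformly_continuous_on_def by metis
  obtain n1 :: nat where n1: "(c - a) / \<delta> < real n1" using reals_Archimedean2 by blast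
  obtain n2 :: nat where n2: "2 * BF * M * (c - a) / e < real n2" using reals_Archimedean2 by blast
  define n where "n = n1 + n2 + 1"
  have n: "n > 0" by (simp add: n_def)
  have hpos: "hstep a c n > 0" using hh_pos[OF ac(1) n] .
  have hd: "hstep a c n < \<delta>"
  proof -
    have "(c - a) / \<delta> < real n" using n1 by (simp add: n_def)
    then have "c - a < real n * \<delta>" using \<delta> by (simp add: divide_less_eq mult.commute)
    then show ?thesis using n by (simp add: hstep_def divide_less_eq mult.commute)
  qed
  have hM: "BF * M * hstep a c n \<le> e / 2"
  proof -
    have "2 * BF * M * (c - a) / e < real n" using n2 by (simp add: n_def)
    then have "2 * BF * M * (c - a) < real n * e" using e by (simp add: divide_less_eq)
    then have "BF * M * (c - a) / real n \<le> e / 2" using n by (simp add: divide_le_eq field_simps)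
    then show ?thesis by (simp add: hstep_def)
  qed
  define P where "P = pvar g a"
  define D where "D i = BF * (P (ppt a c n (Suc i)) - P (ppt a c n i)) + Bg * e1" for i
  have cellsub: "{ppt a c n i..ppt a c n (Suc i)} \<subseteq> {a..c}" if "i < n" for i
    using ppt_range[OF ac(1) n, of i] ppt_range[OF ac(1) n, of "Suc i"] that by auto
  have Dle: "dsup (\<lambda>y. F y * g y) a c n i - dinf (\<lambda>y. F y * g y) a c n i \<le> D i" if i: "i < n" for i
  proof (rule dsup_dinf_le[OF ac(1) n _ i])
    show "\<bar>F y * g y\<bar> \<le> BF * Bg" if "y \<in> {a..c}" for y
      unfolding abs_mult using BF gb[OF that] that by (intro mult_mono) auto
    fix y z assume y: "y \<in> {ppt a c n i..ppt a c n (Suc i)}" and z: "z \<in> {ppt a c n i..ppt a c n (Suc i)}"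
    have yz: "y \<in> {a..c}" "z \<in> {a..c}" using cellsub[OF i] y z by auto
    have gyz: "\<bar>g y - g z\<bar> \<le> P (ppt a c n (Suc i)) - P (ppt a c n i)"
    proof -
      have lo: "a \<le> ppt a c n i" using cellsub[OF i] ppt_mono[OF ac(1) n, of i "Suc i"] by auto
      have hi: "ppt a c n (Suc i) \<le> b" using cellsub[OF i] ppt_mono[OF ac(1) n, of i "Suc i"] ac by auto
      have "\<bar>g (max y z) - g (min y z)\<bar> \<le> P (max y z) - P (min y z)"
        unfolding P_def using y z lo hi by (intro g_diff_le[OF M]) auto
      moreover have "P (max y z) \<le> P (ppt a c n (Suc i))" unfolding P_def using y z lo hi by (intro pvar_mono[OF M]) auto
      moreover have "P (ppt a c n i) \<le> P (min y z)" unfolding P_def using y z lo hi by (intro pvar_mono[OF M]) auto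
      moreover have "\<bar>g y - g z\<bar> = \<bar>g (max y z) - g (min y z)\<bar>" by (cases "y \<le> z") (auto simp: max_def min_def abs_minus_commute)
      ultimately show ?thesis by linarith
    qed
    have Fyz: "\<bar>F y - F z\<bar> \<le> e1"
    proof -
      have "\<bar>y - z\<bar> \<le> hstep a c n" using y z by (auto simp: ppt_Suc[OF ac(1) n])
      then have "dist y z < \<delta>" using hd by (simp add: dist_real_def)
      from \<delta>(2)[OF yz(2) yz(1) this] show ?thesis by (simp add: dist_real_def)
    qed
    have "F y * g y - F z * g z = F y * (g y - g z) + g z * (F y - F z)" by (simp add: algebra_simps)
    also have "\<dots> \<le> \<bar>F y\<bar> * \<bar>g y - g z\<bar> + \<bar>g z\<bar> * \<bar>F y - F z\<bar>"
      by (metis abs_ge_self abs_mult add_mono)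
    also have "\<dots> \<le> BF * (P (ppt a c n (Suc i)) - P (ppt a c n i)) + Bg * e1"
      using BF(1)[OF yz(1)] BF(2) gb[OF yz(2)] gyz Fyz Bg0 by (intro add_mono mult_mono) auto
    finally show "F y * g y - F z * g z \<le> D i" by (simp add: D_def)
  qed
  have "(\<Sum>i<n. dsup (\<lambda>y. F y * g y) a c n i - dinf (\<lambda>y. F y * g y) a c n i) \<le> (\<Sum>i<n. D i)"
    by (rule sum_mono) (use Dle in auto)
  also have "(\<Sum>i<n. D i) = BF * (P c - P a) + real n * (Bg * e1)"
  proof -
    have "(\<Sum>i<n. P (ppt a c n (Suc i)) - P (ppt a c n i)) = P (ppt a c n n) - P (ppt a c n 0)"
      by (rule sum_lessThan_telescope)
    then show ?thesis by (simp add: D_def sum.distrib sum_distrib_left[symmetric] ppt_0[OF ac(1) n] ppt_n[OF ac(1) n])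
  qed
  finally have S: "(\<Sum>i<n. dsup (\<lambda>y. F y * g y) a c n i - dinf (\<lambda>y. F y * g y) a c n i) * hstep a c n
      \<le> (BF * (P c - P a) + real n * (Bg * e1)) * hstep a c n"
    using hpos by (intro mult_right_mono) auto
  also have "\<dots> = BF * (P c - P a) * hstep a c n + Bg * e1 * (c - a)"
    using n by (simp add: hstep_def field_simps)
  also have "\<dots> < e"
  proof -
    have "P c - P a \<le> M"
      using pvar_le_M[where g=g and a=a and b=b and M=M, OF M, of c] pvar_nonneg[where g=g and a=a and b=b and M=M, OF M, of a] ac
      by (simp add: P_def)
    then have "BF * (P c - P a) * hstep a c n \<le> BF * M * hstep a c n"
      using BF(2) hpos by (intro mult_right_mono mult_left_mono) auto
    moreover have "Bg * e1 * (c - a) < e / 2"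
    proof -
      have ne: "c - a \<noteq> 0" "Bg + 1 \<noteq> 0" using ac Bg0 by auto
      have "e1 * (c - a) = e / (2 * (Bg + 1))" unfolding e1_def using ne by simp
      then have "Bg * e1 * (c - a) = (e / 2) * (Bg / (Bg + 1))" by (simp add: mult.assoc)
      also have "\<dots> < (e / 2) * 1"
      proof (rule mult_strict_left_mono)
        show "Bg / (Bg + 1) < 1" using Bg0 by simp
      qed (use e in simp)
      finally show ?thesis by simp
    qed
    ultimately show ?thesis using hM by linarith
  qed
  finally show "\<exists>n>0. (\<Sum>i<n. dsup (\<lambda>y. F y * g y) a c n i - dinf (\<lambda>y. F y * g y) a c n i) * hstep a c n < e"
    using n by blast
qed

lemma avg_right:
  fixes \<phi> :: "real \<Rightarrow> real"
  assumes int: "\<phi> integrable_on {a..b}" and x: "a \<le> x" "x < b" and lim: "(\<phi> \<longlongrightarrow> L) (at_right x)"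
  shows "((\<lambda>t. integral {x..x+t} \<phi> / t) \<longlongrightarrow> L) (at_right 0)"
proof (rule tendstoI)
  fix e :: real assume e: "e > 0"
  have e2: "e/2 > 0" using e by simp
  from tendstoD[OF lim e2] obtain b' where b': "b' > x" "\<And>y. x < y \<Longrightarrow> y < b' \<Longrightarrow> dist (\<phi> y) L < e/2"
    unfolding eventually_at_right_field by blast
  define \<delta> where "\<delta> = b' - x"
  have \<delta>: "\<delta> > 0" "\<And>y. x < y \<Longrightarrow> y < x + \<delta> \<Longrightarrow> dist (\<phi> y) L < e/2"
    using b' by (auto simp: \<delta>_def)
  show "eventually (\<lambda>t. dist (integral {x..x+t} \<phi> / t) L < e) (at_right 0)"
    unfolding eventually_at_right_field
  proof (intro exI[of _ "min \<delta> (b - x)"] conjI allI impI)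
    show "0 < min \<delta> (b - x)" using \<delta> x by simp
    fix t :: real assume t: "0 < t" "t < min \<delta> (b - x)"
    define \<psi> where "\<psi> y = (if y = x then L else \<phi> y)" for y
    have sub: "{x..x+t} \<subseteq> {a..b}" using t x by auto
    have intx: "\<phi> integrable_on {x..x+t}" by (rule integrable_on_subinterval[OF int sub])
    have eqi: "integral {x..x+t} \<phi> = integral {x..x+t} \<psi>"
      by (rule integral_spike[of "{x}"]) (auto simp: \<psi>_def)
    have int\<psi>: "\<psi> integrable_on {x..x+t}"
      by (rule integrable_spike[OF intx, where S="{x}"]) (auto simp: \<psi>_def)
    have "norm (integral {x..x+t} (\<lambda>y. \<psi> y - L)) \<le> integral {x..x+t} (\<lambda>y. e/2)"
    proof (rule integral_norm_bound_integral)
      show "(\<lambda>y. \<psi> y - L) integrable_on {x..x+t}" using int\<psi> by (intro integrable_diff) auto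
      show "(\<lambda>y. e/2) integrable_on {x..x+t}" by (rule integrable_const_ivl)
      fix y assume y: "y \<in> {x..x+t}"
      show "norm (\<psi> y - L) \<le> e/2"
      proof (cases "y = x")
        case True then show ?thesis using e by (simp add: \<psi>_def)
      next
        case False
        then have "dist (\<phi> y) L < e/2" using \<delta>(2)[of y] y t by auto
        then show ?thesis using False by (simp add: \<psi>_def dist_real_def)
      qed
    qed
    also have "\<dots> = e/2 * t" using t by simp
    finally have b0: "\<bar>integral {x..x+t} (\<lambda>y. \<psi> y - L)\<bar> \<le> e/2 * t" by simp
    have "integral {x..x+t} (\<lambda>y. \<psi> y - L) = integral {x..x+t} \<psi> - integral {x..x+t} (\<lambda>y. L)"
      by (rule integral_diff[OF int\<psi> integrable_const_ivl])
    also have "integral {x..x+t} (\<lambda>y. L) = L * t" using t by simp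
    finally have b1: "\<bar>integral {x..x+t} \<psi> - L * t\<bar> \<le> e/2 * t" using b0 by simp
    have "integral {x..x+t} \<phi> / t - L = (integral {x..x+t} \<psi> - L * t) / t"
      unfolding eqi using t by (simp add: field_simps)
    then have "dist (integral {x..x+t} \<phi> / t) L = \<bar>integral {x..x+t} \<psi> - L * t\<bar> / t"
      using t by (simp add: dist_real_def)
    also have "\<dots> \<le> e/2" using b1 t by (simp add: divide_le_eq)
    also have "\<dots> < e" using e by simp
    finally show "dist (integral {x..x+t} \<phi> / t) L < e" .
  qed
qed

lemma avg_left:
  fixes \<phi> :: "real \<Rightarrow> real"
  assumes int: "\<phi> integrable_on {a..b}" and x: "a < x" "x \<le> b" and lim: "(\<phi> \<longlongrightarrow> L) (at_left x)"
  shows "((\<lambda>t. integral {x-t..x} \<phi> / t) \<longlongrightarrow> L) (at_right 0)"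
proof (rule tendstoI)
  fix e :: real assume e: "e > 0"
  have e2: "e/2 > 0" using e by simp
  from tendstoD[OF lim e2] obtain b' where b': "b' < x" "\<And>y. b' < y \<Longrightarrow> y < x \<Longrightarrow> dist (\<phi> y) L < e/2"
    unfolding eventually_at_left_field by blast
  define \<delta> where "\<delta> = x - b'"
  have \<delta>: "\<delta> > 0" "\<And>y. y < x \<Longrightarrow> x - \<delta> < y \<Longrightarrow> dist (\<phi> y) L < e/2"
    using b' by (auto simp: \<delta>_def)
  show "eventually (\<lambda>t. dist (integral {x-t..x} \<phi> / t) L < e) (at_right 0)"
    unfolding eventually_at_right_field
  proof (intro exI[of _ "min \<delta> (x - a)"] conjI allI impI)
    show "0 < min \<delta> (x - a)" using \<delta> x by simp
    fix t :: real assume t: "0 < t" "t < min \<delta> (x - a)"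
    define \<psi> where "\<psi> y = (if y = x then L else \<phi> y)" for y
    have sub: "{x-t..x} \<subseteq> {a..b}" using t x by auto
    have intx: "\<phi> integrable_on {x-t..x}" by (rule integrable_on_subinterval[OF int sub])
    have eqi: "integral {x-t..x} \<phi> = integral {x-t..x} \<psi>"
      by (rule integral_spike[of "{x}"]) (auto simp: \<psi>_def)
    have int\<psi>: "\<psi> integrable_on {x-t..x}"
      by (rule integrable_spike[OF intx, where S="{x}"]) (auto simp: \<psi>_def)
    have "norm (integral {x-t..x} (\<lambda>y. \<psi> y - L)) \<le> integral {x-t..x} (\<lambda>y. e/2)"
    proof (rule integral_norm_bound_integral)
      show "(\<lambda>y. \<psi> y - L) integrable_on {x-t..x}" using int\<psi> by (intro integrable_diff) auto
      show "(\<lambda>y. e/2) integrable_on {x-t..x}" by (rule integrable_const_ivl)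
      fix y assume y: "y \<in> {x-t..x}"
      show "norm (\<psi> y - L) \<le> e/2"
      proof (cases "y = x")
        case True then show ?thesis using e by (simp add: \<psi>_def)
      next
        case False
        then have "dist (\<phi> y) L < e/2" using \<delta>(2)[of y] y t by auto
        then show ?thesis using False by (simp add: \<psi>_def dist_real_def)
      qed
    qed
    also have "\<dots> = e/2 * t" using t by simp
    finally have b0: "\<bar>integral {x-t..x} (\<lambda>y. \<psi> y - L)\<bar> \<le> e/2 * t" by simp
    have "integral {x-t..x} (\<lambda>y. \<psi> y - L) = integral {x-t..x} \<psi> - integral {x-t..x} (\<lambda>y. L)"
      by (rule integral_diff[OF int\<psi> integrable_const_ivl])
    also have "integral {x-t..x} (\<lambda>y. L) = L * t" using t by simp
    finally have b1: "\<bar>integral {x-t..x} \<psi> - L * t\<bar> \<le> e/2 * t" using b0 by simp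
    have "integral {x-t..x} \<phi> / t - L = (integral {x-t..x} \<psi> - L * t) / t"
      unfolding eqi using t by (simp add: field_simps)
    then have "dist (integral {x-t..x} \<phi> / t) L = \<bar>integral {x-t..x} \<psi> - L * t\<bar> / t"
      using t by (simp add: dist_real_def)
    also have "\<dots> \<le> e/2" using b1 t by (simp add: divide_le_eq)
    also have "\<dots> < e" using e by simp
    finally show "dist (integral {x-t..x} \<phi> / t) L < e" .
  qed
qed


lemma cont_at_right_shift:
  fixes U :: "real \<Rightarrow> real"
  assumes U: "continuous_on {a..b} U" and x: "a \<le> x" "x < b"
  shows "((\<lambda>t. U (x + t)) \<longlongrightarrow> U x) (at_right 0)"
proof -
  have c0: "continuous_on {0..b-x} (\<lambda>t. U (x + t))" using cont_shift_r[OF U] x by auto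
  have "(0::real) \<in> {0..b-x}" using x by simp
  from c0[unfolded continuous_on_def, rule_format, OF this]
  have "((\<lambda>t. U (x + t)) \<longlongrightarrow> U (x + 0)) (at 0 within {0..b-x})" .
  then show ?thesis using x by (simp add: at_within_Icc_at_right)
qed

lemma prod_right:
  fixes U V G Z f :: "real \<Rightarrow> real"
  assumes x: "x \<in> {a..<b}" and U: "continuous_on {a..b} U" and V: "continuous_on {a..b} V"
    and G: "continuous_on {a..b} G" and Z: "continuous_on {a..b} Z"
    and c: "c \<ge> 0" "G x + c \<ge> 0"
    and Glim: "((\<lambda>t. (G (x + t) - G x) / t) \<longlongrightarrow> \<gamma>) (at_right 0)"
    and Zlim: "((\<lambda>t. (Z (x + t) - Z x) / t) \<longlongrightarrow> U x * \<gamma>) (at_right 0)"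
    and RU: "\<And>e. e > 0 \<Longrightarrow> eventually (\<lambda>s. f x - e < lap_right U b x s) at_top"
    and RV: "\<And>e. e > 0 \<Longrightarrow> eventually (\<lambda>s. - f x - e < lap_right (\<lambda>y. - V y) b x s) at_top"
    and e: "e > 0"
  shows "eventually (\<lambda>s. f x * G x - e < lap_right (\<lambda>y. U y * (G y + c) - c * V y - Z y) b x s) at_top"
proof -
  have xab: "x \<in> {a..b}" using x by auto
  have V': "continuous_on {a..b} (\<lambda>y. - V y)" by (intro continuous_intros V)
  define h where "h t = U (x + t) * (G (x + t) - G x) - (Z (x + t) - Z x)" for t
  have hc: "continuous_on {0..b-x} h" unfolding h_def
    by (intro continuous_intros cont_shift_r[OF U xab] cont_shift_r[OF G xab] cont_shift_r[OF Z xab])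
  have dec: "lap_right (\<lambda>y. U y * (G y + c) - c * V y - Z y) b x s
      = (G x + c) * lap_right U b x s + c * lap_right (\<lambda>y. - V y) b x s + s^2 * integral {0..b-x} (\<lambda>t. exp (- s * t) * h t)" for s
    by (rule lap_right_decomp[OF xab U V' hc]) (simp add: h_def algebra_simps)
  have hlim: "((\<lambda>t. h t / t) \<longlongrightarrow> U x * \<gamma> - U x * \<gamma>) (at_right 0)"
  proof -
    have "((\<lambda>t. U (x + t) * ((G (x + t) - G x) / t) - (Z (x + t) - Z x) / t) \<longlongrightarrow> U x * \<gamma> - U x * \<gamma>) (at_right 0)"
      using x by (intro tendsto_intros cont_at_right_shift[OF U] Glim Zlim) auto
    moreover have "(\<lambda>t. U (x + t) * ((G (x + t) - G x) / t) - (Z (x + t) - Z x) / t) = (\<lambda>t. h t / t)"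
    proof (rule ext)
      fix t :: real
      show "U (x + t) * ((G (x + t) - G x) / t) - (Z (x + t) - Z x) / t = h t / t"
        by (cases "t = 0") (auto simp: h_def field_simps)
    qed
    ultimately show ?thesis by simp
  qed
  have Rlim: "((\<lambda>s. s^2 * integral {0..b-x} (\<lambda>t. exp (- s * t) * h t)) \<longlongrightarrow> 0) at_top"
    using lap_lim[of "b - x" h "U x * \<gamma> - U x * \<gamma>"] x hc hlim by simp
  define K where "K = G x + 2 * c + 1"
  have K: "K > 0" using c by (simp add: K_def)
  define e1 where "e1 = e / K"
  have e1: "e1 > 0" using e K by (simp add: e1_def)
  have ev3: "eventually (\<lambda>s. \<bar>s^2 * integral {0..b-x} (\<lambda>t. exp (- s * t) * h t)\<bar> < e1) at_top"
    using tendstoD[OF Rlim e1] by (simp add: dist_real_def)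
  show ?thesis
    using RU[OF e1] RV[OF e1] ev3
  proof eventually_elim
    case (elim s)
    have "(G x + c) * (f x - e1) \<le> (G x + c) * lap_right U b x s"
      using elim(1) c by (intro mult_left_mono) auto
    moreover have "c * (- f x - e1) \<le> c * lap_right (\<lambda>y. - V y) b x s"
      using elim(2) c by (intro mult_left_mono) auto
    moreover have "(G x + c) * (f x - e1) + c * (- f x - e1) - e1 = f x * G x - e"
    proof -
      have "e1 * K = e" using K by (simp add: e1_def)
      then show ?thesis by (simp add: K_def algebra_simps)
    qed
    ultimately show ?case using elim(3) dec[of s] by (smt (verit))
  qed
qed

lemma cont_reflect:
  fixes U :: "real \<Rightarrow> real"
  assumes "continuous_on {a..b} U"
  shows "continuous_on {-b..-a} (\<lambda>y. U (- y))"
proof -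
  have "continuous_on {-b..-a} (\<lambda>y. - y :: real)" by (intro continuous_intros)
  then show ?thesis by (rule continuous_on_compose2[OF assms]) auto
qed

lemma prod_left:
  fixes U V G Z f :: "real \<Rightarrow> real"
  assumes x: "x \<in> {a<..b}" and U: "continuous_on {a..b} U" and V: "continuous_on {a..b} V"
    and G: "continuous_on {a..b} G" and Z: "continuous_on {a..b} Z"
    and c: "c \<ge> 0" "G x + c \<ge> 0"
    and Glim: "((\<lambda>t. (G x - G (x - t)) / t) \<longlongrightarrow> \<gamma>) (at_right 0)"
    and Zlim: "((\<lambda>t. (Z x - Z (x - t)) / t) \<longlongrightarrow> U x * \<gamma>) (at_right 0)"
    and LU: "\<And>e. e > 0 \<Longrightarrow> eventually (\<lambda>s. f x - e < lap_left U a x s) at_top"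
    and LV: "\<And>e. e > 0 \<Longrightarrow> eventually (\<lambda>s. - f x - e < lap_left (\<lambda>y. - V y) a x s) at_top"
    and e: "e > 0"
  shows "eventually (\<lambda>s. f x * G x - e < lap_left (\<lambda>y. U y * (G y + c) - c * V y - Z y) a x s) at_top"
proof -
  define U' where "U' y = - U (- y)" for y
  define V' where "V' y = - V (- y)" for y
  define G' where "G' y = G (- y)" for y
  define Z' where "Z' y = - Z (- y)" for y
  define f' where "f' y = f (- y)" for y
  have x': "- x \<in> {-b..<-a}" using x by auto
  have cU: "continuous_on {-b..-a} U'" unfolding U'_def by (intro continuous_intros cont_reflect[OF U])
  have cV: "continuous_on {-b..-a} V'" unfolding V'_def by (intro continuous_intros cont_reflect[OF V])
  have cG: "continuous_on {-b..-a} G'" unfolding G'_def by (intro continuous_intros cont_reflect[OF G])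
  have cZ: "continuous_on {-b..-a} Z'" unfolding Z'_def by (intro continuous_intros cont_reflect[OF Z])
  have Glim': "((\<lambda>t. (G' (- x + t) - G' (- x)) / t) \<longlongrightarrow> - \<gamma>) (at_right 0)"
  proof -
    have "(\<lambda>t. (G' (- x + t) - G' (- x)) / t) = (\<lambda>t. - ((G x - G (x - t)) / t))"
    proof (rule ext)
      fix t :: real
      show "(G' (- x + t) - G' (- x)) / t = - ((G x - G (x - t)) / t)"
        by (cases "t = 0") (auto simp: G'_def field_simps)
    qed
    then show ?thesis using tendsto_minus[OF Glim] by simp
  qed
  have Zlim': "((\<lambda>t. (Z' (- x + t) - Z' (- x)) / t) \<longlongrightarrow> U' (- x) * - \<gamma>) (at_right 0)"
  proof -
    have "(\<lambda>t. (Z' (- x + t) - Z' (- x)) / t) = (\<lambda>t. (Z x - Z (x - t)) / t)"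
    proof (rule ext)
      fix t :: real
      show "(Z' (- x + t) - Z' (- x)) / t = (Z x - Z (x - t)) / t"
        by (cases "t = 0") (auto simp: Z'_def field_simps)
    qed
    moreover have "U' (- x) * - \<gamma> = U x * \<gamma>" by (simp add: U'_def)
    ultimately show ?thesis using Zlim by simp
  qed
  have RU: "eventually (\<lambda>s. f' (- x) - e < lap_right U' (- a) (- x) s) at_top" if "e > 0" for e
  proof -
    have "U' = (\<lambda>y. - U (- y))" by (rule ext) (simp add: U'_def)
    then show ?thesis using LU[OF that] by (simp add: lap_left_reflect f'_def)
  qed
  have RV: "eventually (\<lambda>s. - f' (- x) - e < lap_right (\<lambda>y. - V' y) (- a) (- x) s) at_top" if "e > 0" for e
    using LV[OF that] by (simp add: lap_left_reflect V'_def f'_def)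
  have "eventually (\<lambda>s. f' (- x) * G' (- x) - e < lap_right (\<lambda>y. U' y * (G' y + c) - c * V' y - Z' y) (- a) (- x) s) at_top"
  proof (rule prod_right[where f=f', OF x' cU cV cG cZ c(1) _ Glim' Zlim' RU RV e])
    show "G' (- x) + c \<ge> 0" using c(2) by (simp add: G'_def)
  qed
  moreover have "(\<lambda>y. U' y * (G' y + c) - c * V' y - Z' y) = (\<lambda>y. - (U (- y) * (G (- y) + c) - c * V (- y) - Z (- y)))"
    by (rule ext) (simp add: U'_def V'_def G'_def Z'_def algebra_simps)
  ultimately show ?thesis by (simp add: lap_left_reflect f'_def G'_def)
qed

lemma prod_major:
  fixes U V G Z f :: "real \<Rightarrow> real"
  assumes ab: "a < b" and U: "lmaj f a b U" and V: "lmaj (\<lambda>x. - f x) a b (\<lambda>x. - V x)"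
    and G: "continuous_on {a..b} G" and Z: "continuous_on {a..b} Z"
    and c: "c \<ge> 0" "\<And>y. y \<in> {a..b} \<Longrightarrow> G y + c \<ge> 0"
    and R: "\<And>x. x \<in> {a..<b} \<Longrightarrow> \<exists>\<gamma>. ((\<lambda>t. (G (x + t) - G x) / t) \<longlongrightarrow> \<gamma>) (at_right 0) \<and>
                                     ((\<lambda>t. (Z (x + t) - Z x) / t) \<longlongrightarrow> U x * \<gamma>) (at_right 0)"
    and L: "\<And>x. x \<in> {a<..b} \<Longrightarrow> \<exists>\<gamma>. ((\<lambda>t. (G x - G (x - t)) / t) \<longlongrightarrow> \<gamma>) (at_right 0) \<and>
                                     ((\<lambda>t. (Z x - Z (x - t)) / t) \<longlongrightarrow> U x * \<gamma>) (at_right 0)"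
  shows "lmaj (\<lambda>y. f y * G y) a b (\<lambda>y. U y * (G y + c) - c * V y - Z y)"
proof -
  have cU: "continuous_on {a..b} U" using U by (simp add: lmaj_def)
  have cV': "continuous_on {a..b} (\<lambda>x. - V x)" using V by (simp add: lmaj_def)
  have cV: "continuous_on {a..b} V" using continuous_on_minus[OF cV'] by simp
  show ?thesis unfolding lmaj_def
  proof (intro conjI ballI allI impI)
    show "continuous_on {a..b} (\<lambda>y. U y * (G y + c) - c * V y - Z y)"
      by (intro continuous_intros cU cV G Z)
  next
    fix x e :: real assume x: "x \<in> {a..<b}" and e: "e > 0"
    obtain \<gamma> where \<gamma>: "((\<lambda>t. (G (x + t) - G x) / t) \<longlongrightarrow> \<gamma>) (at_right 0)"
      "((\<lambda>t. (Z (x + t) - Z x) / t) \<longlongrightarrow> U x * \<gamma>) (at_right 0)" using R[OF x] by blast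
    have Gc: "G x + c \<ge> 0" using c(2) x by auto
    show "eventually (\<lambda>s. f x * G x - e < lap_right (\<lambda>y. U y * (G y + c) - c * V y - Z y) b x s) at_top"
      by (rule prod_right[OF x cU cV G Z c(1) Gc \<gamma> _ _ e])
         (use U V x in \<open>auto simp: lmaj_def\<close>)
  next
    fix x e :: real assume x: "x \<in> {a<..b}" and e: "e > 0"
    obtain \<gamma> where \<gamma>: "((\<lambda>t. (G x - G (x - t)) / t) \<longlongrightarrow> \<gamma>) (at_right 0)"
      "((\<lambda>t. (Z x - Z (x - t)) / t) \<longlongrightarrow> U x * \<gamma>) (at_right 0)" using L[OF x] by blast
    have Gc: "G x + c \<ge> 0" using c(2) x by auto
    show "eventually (\<lambda>s. f x * G x - e < lap_left (\<lambda>y. U y * (G y + c) - c * V y - Z y) a x s) at_top"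
      by (rule prod_left[OF x cU cV G Z c(1) Gc \<gamma> _ _ e])
         (use U V x in \<open>auto simp: lmaj_def\<close>)
  qed
qed


lemma lap_right_shift: "lap_right (\<lambda>y. U y - k) b x s = lap_right U b x s"
  unfolding lap_right_def by simp

lemma lap_left_shift: "lap_left (\<lambda>y. U y - k) a x s = lap_left U a x s"
  unfolding lap_left_def by simp

lemma lmaj_shift: "lmaj \<phi> a b U \<Longrightarrow> lmaj \<phi> a b (\<lambda>y. U y - k)"
  unfolding lmaj_def lap_right_shift lap_left_shift by (auto intro!: continuous_intros)

lemma ereal_between:
  assumes "ereal l \<le> X" "X \<le> ereal u"
  shows "l \<le> real_of_ereal X" "real_of_ereal X \<le> u"
  using assms by (cases X; auto)+

lemma laplace_cong:
  assumes "\<And>x. x \<in> {a..b} \<Longrightarrow> \<phi> x = \<psi> x"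
  shows "laplace_integrable \<phi> a b = laplace_integrable \<psi> a b" "laplace_integral \<phi> a b = laplace_integral \<psi> a b"
proof -
  have "laplace_major \<phi> a b = laplace_major \<psi> a b"
    by (rule ext) (simp add: laplace_major_def assms)
  moreover have "laplace_minor \<phi> a b = laplace_minor \<psi> a b"
    by (rule ext) (simp add: laplace_minor_def assms)
  ultimately show "laplace_integrable \<phi> a b = laplace_integrable \<psi> a b" "laplace_integral \<phi> a b = laplace_integral \<psi> a b"
    by (simp_all add: laplace_integrable_def laplace_integral_def)
qed

lemma cont_right_lim:
  fixes \<Phi> :: "real \<Rightarrow> real"
  assumes "continuous_on {a..b} \<Phi>" "a \<le> x" "x < b"
  shows "(\<Phi> \<longlongrightarrow> \<Phi> x) (at_right x)"
proof -
  have "(\<Phi> \<longlongrightarrow> \<Phi> x) (at x within {a..b})" using assms by (simp add: continuous_on_def)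
  then have "(\<Phi> \<longlongrightarrow> \<Phi> x) (at x within {x..b})" by (rule tendsto_within_subset) (use assms in auto)
  then show ?thesis using assms by (simp add: at_within_Icc_at_right)
qed

lemma cont_left_lim:
  fixes \<Phi> :: "real \<Rightarrow> real"
  assumes "continuous_on {a..b} \<Phi>" "a < x" "x \<le> b"
  shows "(\<Phi> \<longlongrightarrow> \<Phi> x) (at_left x)"
proof -
  have "(\<Phi> \<longlongrightarrow> \<Phi> x) (at x within {a..b})" using assms by (simp add: continuous_on_def)
  then have "(\<Phi> \<longlongrightarrow> \<Phi> x) (at x within {a..x})" by (rule tendsto_within_subset) (use assms in auto)
  then show ?thesis using assms by (simp add: at_within_Icc_at_left)
qed

lemma deriv_right:
  fixes \<psi> :: "real \<Rightarrow> real"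
  assumes int: "\<psi> integrable_on {a..b}" and x: "a \<le> x" "x < b" and lim: "(\<psi> \<longlongrightarrow> L) (at_right x)"
  shows "((\<lambda>t. (integral {a..x+t} \<psi> - integral {a..x} \<psi>) / t) \<longlongrightarrow> L) (at_right 0)"
proof -
  have "eventually (\<lambda>t. integral {x..x+t} \<psi> / t = (integral {a..x+t} \<psi> - integral {a..x} \<psi>) / t) (at_right (0::real))"
    unfolding eventually_at_right_field
  proof (intro exI[of _ "b - x"] conjI allI impI)
    show "0 < b - x" using x by simp
    fix t :: real assume t: "0 < t" "t < b - x"
    have "integral {a..x} \<psi> + integral {x..x+t} \<psi> = integral {a..x+t} \<psi>"
      by (rule Henstock_Kurzweil_Integration.integral_combine) (use x t integrable_on_subinterval[OF int, of a "x+t"] in auto)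
    then show "integral {x..x+t} \<psi> / t = (integral {a..x+t} \<psi> - integral {a..x} \<psi>) / t" by (simp add: algebra_simps)
  qed
  from Lim_transform_eventually[OF avg_right[OF int x lim] this] show ?thesis .
qed

lemma deriv_left:
  fixes \<psi> :: "real \<Rightarrow> real"
  assumes int: "\<psi> integrable_on {a..b}" and x: "a < x" "x \<le> b" and lim: "(\<psi> \<longlongrightarrow> L) (at_left x)"
  shows "((\<lambda>t. (integral {a..x} \<psi> - integral {a..x-t} \<psi>) / t) \<longlongrightarrow> L) (at_right 0)"
proof -
  have "eventually (\<lambda>t. integral {x-t..x} \<psi> / t = (integral {a..x} \<psi> - integral {a..x-t} \<psi>) / t) (at_right (0::real))"
    unfolding eventually_at_right_field
  proof (intro exI[of _ "x - a"] conjI allI impI)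
    show "0 < x - a" using x by simp
    fix t :: real assume t: "0 < t" "t < x - a"
    have "integral {a..x-t} \<psi> + integral {x-t..x} \<psi> = integral {a..x} \<psi>"
      by (rule Henstock_Kurzweil_Integration.integral_combine) (use x t integrable_on_subinterval[OF int, of a x] in auto)
    then show "integral {x-t..x} \<psi> / t = (integral {a..x} \<psi> - integral {a..x-t} \<psi>) / t" by (simp add: algebra_simps)
  qed
  from Lim_transform_eventually[OF avg_left[OF int x lim] this] show ?thesis .
qed

lemma cont_times_bv:
  fixes g \<Phi> :: "real \<Rightarrow> real"
  assumes M: "\<And>xs. sorted xs \<Longrightarrow> set xs \<subseteq> {a..b} \<Longrightarrow> lsum g xs \<le> M"
    and ac: "a < c" "c \<le> b" and \<Phi>: "continuous_on {a..c} \<Phi>"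
  shows "(\<lambda>y. \<Phi> y * g y) integrable_on {a..c}"
    "laplace_integral (\<lambda>y. \<Phi> y * g y) a c = integral {a..c} (\<lambda>y. \<Phi> y * g y)"
    "perron_integrable (\<lambda>y. \<Phi> y * g y) a c"
    "perron_integral (\<lambda>y. \<Phi> y * g y) a c = integral {a..c} (\<lambda>y. \<Phi> y * g y)"
proof -
  obtain B where B: "\<forall>y\<in>{a..c}. \<bar>\<Phi> y * g y\<bar> \<le> B" using prod_osc(1)[OF M ac \<Phi>] by blast
  note D = darboux_integral[OF ac(1), of "\<lambda>y. \<Phi> y * g y" B, OF _ prod_osc(2)[OF M ac \<Phi>]]
  show "(\<lambda>y. \<Phi> y * g y) integrable_on {a..c}"
    "laplace_integral (\<lambda>y. \<Phi> y * g y) a c = integral {a..c} (\<lambda>y. \<Phi> y * g y)"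
    "perron_integrable (\<lambda>y. \<Phi> y * g y) a c"
    "perron_integral (\<lambda>y. \<Phi> y * g y) a c = integral {a..c} (\<lambda>y. \<Phi> y * g y)"
    using D B by auto
qed


theorem theorem6p3:
  fixes f g F G :: "real \<Rightarrow> real" and a b :: real
  assumes "a < b"
    and "laplace_integrable f a b"
    and "bounded_variation_on g a b"
    and "\<And>x. x \<in> {a..b} \<Longrightarrow> F x = laplace_integral f a x"
    and "\<And>x. x \<in> {a..b} \<Longrightarrow> G x = laplace_integral g a x"
  shows "laplace_integrable (\<lambda>x. f x * G x) a b \<and>
         perron_integrable (\<lambda>x. F x * g x) a b \<and>
         laplace_integral (\<lambda>x. f x * G x) a b
           = F b * G b - perron_integral (\<lambda>x. F x * g x) a b"
proof -
  note ab = assms(1)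
  obtain M where M: "\<And>xs. sorted xs \<Longrightarrow> set xs \<subseteq> {a..b} \<Longrightarrow> lsum g xs \<le> M"
    using assms(3) unfolding bounded_variation_on_def lsum_def by blast
  have CG: "(\<lambda>y. \<Phi> y * g y) integrable_on {a..c'}"
    "laplace_integral (\<lambda>y. \<Phi> y * g y) a c' = integral {a..c'} (\<lambda>y. \<Phi> y * g y)"
    "perron_integrable (\<lambda>y. \<Phi> y * g y) a c'"
    "perron_integral (\<lambda>y. \<Phi> y * g y) a c' = integral {a..c'} (\<lambda>y. \<Phi> y * g y)"
    if "a < c'" "c' \<le> b" "continuous_on {a..c'} \<Phi>" for \<Phi> c'
    using cont_times_bv[where g=g and a=a and b=b and M=M and c=c' and \<Phi>=\<Phi>] M that by blast+
  have gint: "g integrable_on {a..b}"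
    using CG(1)[OF ab order_refl, of "\<lambda>_. 1"] by simp
  define G0 where "G0 y = integral {a..y} g" for y
  have GG0: "G y = G0 y" if y: "y \<in> {a..b}" for y
  proof (cases "y = a")
    case True
    then show ?thesis using assms(5)[OF y] by (simp add: G0_def laplace_integral_def)
  next
    case False
    then have "a < y" "y \<le> b" using y by auto
    from CG(2)[OF this, of "\<lambda>_. 1"] show ?thesis using assms(5)[OF y] by (simp add: G0_def)
  qed
  define Bg where "Bg = \<bar>g a\<bar> + M"
  have gb: "\<bar>g y\<bar> \<le> Bg" if "y \<in> {a..b}" for y using g_bounded[where g=g and a=a and b=b and M=M] M that by (simp add: Bg_def)
  have Bg0: "Bg \<ge> 0" using gb[of a] ab by auto
  define c where "c = Bg * (b - a)"
  have c0: "c \<ge> 0" using Bg0 ab by (simp add: c_def)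
  have G0b: "\<bar>G0 y\<bar> \<le> c" if y: "y \<in> {a..b}" for y
  proof -
    have "norm (integral {a..y} g) \<le> integral {a..y} (\<lambda>_. Bg)"
      by (rule integral_norm_bound_integral) (use integrable_on_subinterval[OF gint, of a y] y gb in auto)
    also have "\<dots> = Bg * (y - a)" using y by simp
    also have "\<dots> \<le> Bg * (b - a)" using y Bg0 by (intro mult_left_mono) auto
    finally show ?thesis by (simp add: G0_def c_def)
  qed
  have G0c: "continuous_on {a..b} G0" unfolding G0_def by (rule indefinite_integral_continuous_1[OF gint])

  have lint: "laplace_integrable f a b" by (rule assms(2))
  define T0 where "T0 = (INF U\<in>{U. laplace_major f a b U}. ereal (U b - U a))"
  have T0eq: "(SUP V\<in>{V. laplace_minor f a b V}. ereal (V b - V a)) = T0" and T0fin: "\<bar>T0\<bar> \<noteq> \<infinity>"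
    using lint unfolding laplace_integrable_def T0_def by auto
  obtain t0 where t0: "T0 = ereal t0" using T0fin by (cases T0) auto
  have pairs: "\<exists>U V. lmaj f a b U \<and> lmaj (\<lambda>x. - f x) a b (\<lambda>x. - V x) \<and> U a = 0 \<and> V a = 0 \<and> U b - V b < \<eta>"
    if \<eta>: "\<eta> > 0" for \<eta>
  proof -
    have "T0 < ereal (t0 + \<eta>/2)" using t0 \<eta> by simp
    then obtain U where U: "laplace_major f a b U" "ereal (U b - U a) < ereal (t0 + \<eta>/2)"
      unfolding T0_def by (auto simp: INF_less_iff)
    have "ereal (t0 - \<eta>/2) < T0" using t0 \<eta> by simp
    then obtain V where V: "laplace_minor f a b V" "ereal (t0 - \<eta>/2) < ereal (V b - V a)"
      unfolding T0eq[symmetric] by (auto simp: less_SUP_iff)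
    have lU: "lmaj f a b (\<lambda>y. U y - U a)" using U(1) lmaj_shift lmaj_iff[OF ab] by blast
    have lV0: "lmaj (\<lambda>x. - f x) a b (\<lambda>x. - V x)" using V(1) lmin_iff[OF ab] by blast
    have lV: "lmaj (\<lambda>x. - f x) a b (\<lambda>x. - (V x - V a))"
      using lmaj_shift[OF lV0, of "- V a"] by simp
    show ?thesis
      by (rule exI[of _ "\<lambda>y. U y - U a"], rule exI[of _ "\<lambda>y. V y - V a"]) (use lU lV U(2) V(2) in auto)
  qed
  have sandwich: "V y \<le> F y \<and> F y \<le> U y"
    if U: "lmaj f a b U" and V: "lmaj (\<lambda>x. - f x) a b (\<lambda>x. - V x)" and U0: "U a = 0" and V0: "V a = 0"
      and y: "y \<in> {a..b}" for U V y
  proof (cases "y = a")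
    case True
    then show ?thesis using assms(4)[OF y] U0 V0 by (simp add: laplace_integral_def)
  next
    case False
    then have ay: "a < y" "y \<le> b" using y by auto
    have Uy: "lmaj f a y U" by (rule lmaj_restrict[OF U ay])
    have Vy: "lmaj (\<lambda>x. - f x) a y (\<lambda>x. - V x)" by (rule lmaj_restrict[OF V ay])
    define X where "X = (INF U\<in>{U. laplace_major f a y U}. ereal (U y - U a))"
    have "X \<le> ereal (U y - U a)" unfolding X_def using Uy lmaj_iff[OF ay(1)] by (intro INF_lower) auto
    moreover have "ereal (V y - V a) \<le> X" unfolding X_def
    proof (rule INF_greatest)
      fix U' assume "U' \<in> {U. laplace_major f a y U}"
      then have "lmaj f a y U'" using lmaj_iff[OF ay(1)] by auto
      from lmaj_minor_mono[OF this Vy, of a y] ay show "ereal (V y - V a) \<le> ereal (U' y - U' a)" by simp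
    qed
    moreover have "F y = real_of_ereal X" using assms(4)[OF y] ay by (simp add: laplace_integral_def X_def)
    ultimately show ?thesis using ereal_between[of "V y - V a" X "U y - U a"] U0 V0 by auto
  qed
  have UVgap: "0 \<le> U y - V y \<and> U y - V y \<le> U b - V b"
    if U: "lmaj f a b U" and V: "lmaj (\<lambda>x. - f x) a b (\<lambda>x. - V x)" and U0: "U a = 0" and V0: "V a = 0"
      and y: "y \<in> {a..b}" for U V y
    using lmaj_minor_mono[OF U V, of a y] lmaj_minor_mono[OF U V, of y b] y U0 V0 by auto
  have Fc: "continuous_on {a..b} F"
    unfolding continuous_on_iff
  proof (intro ballI allI impI)
    fix y e :: real assume y: "y \<in> {a..b}" and e: "e > 0"
    obtain U V where UV: "lmaj f a b U" "lmaj (\<lambda>x. - f x) a b (\<lambda>x. - V x)" "U a = 0" "V a = 0" "U b - V b < e/2"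
      using pairs[of "e/2"] e by auto
    have Uc: "continuous_on {a..b} U" using UV(1) by (simp add: lmaj_def)
    obtain d where d: "d > 0" "\<And>z. z \<in> {a..b} \<Longrightarrow> dist z y < d \<Longrightarrow> dist (U z) (U y) < e/2"
      using Uc y e unfolding continuous_on_iff by (metis half_gt_zero)
    show "\<exists>d>0. \<forall>z\<in>{a..b}. dist z y < d \<longrightarrow> dist (F z) (F y) < e"
    proof (intro exI[of _ d] conjI ballI impI)
      show "d > 0" by fact
      fix z assume z: "z \<in> {a..b}" "dist z y < d"
      have sz: "V z \<le> F z \<and> F z \<le> U z" by (rule sandwich[OF UV(1-4) z(1)])
      have sy: "V y \<le> F y \<and> F y \<le> U y" by (rule sandwich[OF UV(1-4) y])
      have gz: "U z - V z \<le> U b - V b" using UVgap[OF UV(1-4) z(1)] by simp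
      have gy: "U y - V y \<le> U b - V b" using UVgap[OF UV(1-4) y] by simp
      have "\<bar>U z - U y\<bar> < e/2" using d(2)[OF z] by (simp add: dist_real_def)
      then have u: "U z - U y < e/2" "U y - U z < e/2" unfolding abs_less_iff by linarith+
      have A: "F z - F y < e" using u sz sy gz gy UV(5) by linarith
      have B: "F y - F z < e" using u sz sy gz gy UV(5) by linarith
      show "dist (F z) (F y) < e" using A B by (simp add: dist_real_def abs_less_iff)
    qed
  qed
  have Fint: "(\<lambda>y. F y * g y) integrable_on {a..b}"
    and Fper: "perron_integrable (\<lambda>y. F y * g y) a b"
    and Fpval: "perron_integral (\<lambda>y. F y * g y) a b = integral {a..b} (\<lambda>y. F y * g y)"
    using CG(1,3,4)[OF ab order_refl Fc] by auto
  have gR: "\<exists>\<gamma>. (g \<longlongrightarrow> \<gamma>) (at_right x)" if "x \<in> {a..<b}" for x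
    using g_right_limit[where g=g and a=a and b=b and M=M] M that by auto
  have gL: "\<exists>\<gamma>. (g \<longlongrightarrow> \<gamma>) (at_left x)" if "x \<in> {a<..b}" for x
    using g_left_limit[where g=g and a=a and b=b and M=M] M that by auto
  have Wmaj: "lmaj (\<lambda>y. f' y * G0 y) a b (\<lambda>y. U y * (G0 y + c) - c * V y - integral {a..y} (\<lambda>t. U t * g t))"
    if U: "lmaj f' a b U" and V: "lmaj (\<lambda>x. - f' x) a b (\<lambda>x. - V x)" for f' U V
  proof -
    have Uc: "continuous_on {a..b} U" using U by (simp add: lmaj_def)
    have Ugint: "(\<lambda>y. U y * g y) integrable_on {a..b}" by (rule CG(1)[OF ab order_refl Uc])
    show ?thesis
    proof (rule prod_major[OF ab U V G0c _ c0])
      show "continuous_on {a..b} (\<lambda>y. integral {a..y} (\<lambda>t. U t * g t))"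
        by (rule indefinite_integral_continuous_1[OF Ugint])
      show "G0 y + c \<ge> 0" if "y \<in> {a..b}" for y using G0b[OF that] by linarith
    next
      fix x assume x: "x \<in> {a..<b}"
      obtain \<gamma> where \<gamma>: "(g \<longlongrightarrow> \<gamma>) (at_right x)" using gR[OF x] by blast
      have x': "a \<le> x" "x < b" using x by auto
      show "\<exists>\<gamma>. ((\<lambda>t. (G0 (x + t) - G0 x) / t) \<longlongrightarrow> \<gamma>) (at_right 0) \<and>
              ((\<lambda>t. (integral {a..x + t} (\<lambda>t. U t * g t) - integral {a..x} (\<lambda>t. U t * g t)) / t) \<longlongrightarrow> U x * \<gamma>) (at_right 0)"
      proof (intro exI conjI)
        show "((\<lambda>t. (G0 (x + t) - G0 x) / t) \<longlongrightarrow> \<gamma>) (at_right 0)"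
          unfolding G0_def by (rule deriv_right[OF gint x' \<gamma>])
        show "((\<lambda>t. (integral {a..x + t} (\<lambda>t. U t * g t) - integral {a..x} (\<lambda>t. U t * g t)) / t) \<longlongrightarrow> U x * \<gamma>) (at_right 0)"
          by (rule deriv_right[OF Ugint x' tendsto_mult[OF cont_right_lim[OF Uc x'] \<gamma>]])
      qed
    next
      fix x assume x: "x \<in> {a<..b}"
      obtain \<gamma> where \<gamma>: "(g \<longlongrightarrow> \<gamma>) (at_left x)" using gL[OF x] by blast
      have x': "a < x" "x \<le> b" using x by auto
      show "\<exists>\<gamma>. ((\<lambda>t. (G0 x - G0 (x - t)) / t) \<longlongrightarrow> \<gamma>) (at_right 0) \<and>
              ((\<lambda>t. (integral {a..x} (\<lambda>t. U t * g t) - integral {a..x - t} (\<lambda>t. U t * g t)) / t) \<longlongrightarrow> U x * \<gamma>) (at_right 0)"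
      proof (intro exI conjI)
        show "((\<lambda>t. (G0 x - G0 (x - t)) / t) \<longlongrightarrow> \<gamma>) (at_right 0)"
          unfolding G0_def by (rule deriv_left[OF gint x' \<gamma>])
        show "((\<lambda>t. (integral {a..x} (\<lambda>t. U t * g t) - integral {a..x - t} (\<lambda>t. U t * g t)) / t) \<longlongrightarrow> U x * \<gamma>) (at_right 0)"
          by (rule deriv_left[OF Ugint x' tendsto_mult[OF cont_left_lim[OF Uc x'] \<gamma>]])
      qed
    qed
  qed
  define ZF where "ZF = integral {a..b} (\<lambda>y. F y * g y)"
  define T where "T = F b * G0 b - ZF"
  define \<phi> where "\<phi> x = f x * G0 x" for x
  have approx: "\<exists>W1 W2. laplace_major \<phi> a b W1 \<and> laplace_minor \<phi> a b W2 \<and>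
      W1 b - W1 a \<le> T + 3 * \<eta> * c \<and> T - 3 * \<eta> * c \<le> W2 b - W2 a"
    if \<eta>: "\<eta> > 0" for \<eta>
  proof -
    obtain U V where UV: "lmaj f a b U" "lmaj (\<lambda>x. - f x) a b (\<lambda>x. - V x)" "U a = 0" "V a = 0" "U b - V b < \<eta>"
      using pairs[OF \<eta>] by blast
    have Uc: "continuous_on {a..b} U" using UV(1) by (simp add: lmaj_def)
    have Vc': "continuous_on {a..b} (\<lambda>x. - V x)" using UV(2) by (simp add: lmaj_def)
    have Vc: "continuous_on {a..b} V" using continuous_on_minus[OF Vc'] by simp
    have Ugint: "(\<lambda>y. U y * g y) integrable_on {a..b}" by (rule CG(1)[OF ab order_refl Uc])
    have Vgint: "(\<lambda>y. V y * g y) integrable_on {a..b}" by (rule CG(1)[OF ab order_refl Vc])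
    define ZU where "ZU = integral {a..b} (\<lambda>y. U y * g y)"
    define ZV where "ZV = integral {a..b} (\<lambda>y. V y * g y)"
    define W1 where "W1 y = U y * (G0 y + c) - c * V y - integral {a..y} (\<lambda>t. U t * g t)" for y
    define W2 where "W2 y = - ((- V y) * (G0 y + c) - c * (- U y) - integral {a..y} (\<lambda>t. - V t * g t))" for y
    have m1: "lmaj \<phi> a b W1" using Wmaj[OF UV(1) UV(2)] by (simp add: W1_def[abs_def] \<phi>_def[abs_def])
    have m2: "lmaj (\<lambda>x. - \<phi> x) a b (\<lambda>x. - W2 x)"
    proof -
      have l1: "lmaj (\<lambda>x. - (- f x)) a b (\<lambda>x. - (- U x))" using UV(1) by simp
      have eqW: "(\<lambda>x. - W2 x) = (\<lambda>y. (- V y) * (G0 y + c) - c * (- U y) - integral {a..y} (\<lambda>t. - V t * g t))"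
        by (rule ext) (simp add: W2_def)
      have eqp: "(\<lambda>x. - \<phi> x) = (\<lambda>y. (- f y) * G0 y)" by (rule ext) (simp add: \<phi>_def)
      from Wmaj[OF UV(2) l1] show ?thesis unfolding eqW eqp .
    qed
    have W1maj: "laplace_major \<phi> a b W1" using m1 lmaj_iff[OF ab] by blast
    have W2min: "laplace_minor \<phi> a b W2" using m2 lmin_iff[OF ab] by blast
    have G0a: "G0 a = 0" by (simp add: G0_def)
    have v1: "W1 b - W1 a = U b * (G0 b + c) - c * V b - ZU"
      by (simp add: W1_def ZU_def UV(3) UV(4) G0a)
    have negi: "integral {a..b} (\<lambda>t. - V t * g t) = - ZV"
    proof -
      have "(\<lambda>t. - V t * g t) = (\<lambda>t. - (V t * g t))" by (rule ext) simp
      then show ?thesis by (simp add: ZV_def integral_neg)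
    qed
    have w2b: "W2 b = V b * (G0 b + c) - c * U b - ZV" unfolding W2_def negi by (simp add: algebra_simps)
    have w2a: "W2 a = 0" unfolding W2_def by (simp add: UV(3) UV(4) G0a)
    have v2: "W2 b - W2 a = V b * (G0 b + c) - c * U b - ZV" using w2a w2b by simp
    have gap: "0 \<le> U y - V y \<and> U y - V y < \<eta>" if "y \<in> {a..b}" for y
      using UVgap[OF UV(1-4) that] UV(5) by linarith
    have sw: "V y \<le> F y \<and> F y \<le> U y" if "y \<in> {a..b}" for y by (rule sandwich[OF UV(1-4) that])
    have intbound: "\<bar>integral {a..b} (\<lambda>y. (W y - F y) * g y)\<bar> \<le> \<eta> * c"
      if W: "\<And>y. y \<in> {a..b} \<Longrightarrow> \<bar>W y - F y\<bar> \<le> \<eta>" and Wi: "(\<lambda>y. (W y - F y) * g y) integrable_on {a..b}" for W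
    proof -
      have "norm (integral {a..b} (\<lambda>y. (W y - F y) * g y)) \<le> integral {a..b} (\<lambda>y. \<eta> * Bg)"
      proof (rule integral_norm_bound_integral[OF Wi])
        show "(\<lambda>y. \<eta> * Bg) integrable_on {a..b}" by (rule integrable_const_ivl)
        fix y assume y: "y \<in> {a..b}"
        show "norm ((W y - F y) * g y) \<le> \<eta> * Bg"
          unfolding real_norm_def abs_mult using W[OF y] gb[OF y] \<eta> by (intro mult_mono) auto
      qed
      also have "\<dots> = \<eta> * c" using ab by (simp add: c_def)
      finally show ?thesis by simp
    qed
    have dU: "ZU - ZF = integral {a..b} (\<lambda>y. (U y - F y) * g y)"
    proof -
      have "integral {a..b} (\<lambda>y. (U y - F y) * g y) = integral {a..b} (\<lambda>y. U y * g y - F y * g y)"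
        by (simp add: algebra_simps)
      also have "\<dots> = ZU - ZF" unfolding ZU_def ZF_def by (rule integral_diff[OF Ugint Fint])
      finally show ?thesis by simp
    qed
    have dV: "ZV - ZF = integral {a..b} (\<lambda>y. (V y - F y) * g y)"
    proof -
      have "integral {a..b} (\<lambda>y. (V y - F y) * g y) = integral {a..b} (\<lambda>y. V y * g y - F y * g y)"
        by (simp add: algebra_simps)
      also have "\<dots> = ZV - ZF" unfolding ZV_def ZF_def by (rule integral_diff[OF Vgint Fint])
      finally show ?thesis by simp
    qed
    have iU: "(\<lambda>y. (U y - F y) * g y) integrable_on {a..b}"
    proof -
      have "(\<lambda>y. U y * g y - F y * g y) integrable_on {a..b}" by (rule integrable_diff[OF Ugint Fint])
      then show ?thesis by (simp add: algebra_simps)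
    qed
    have iV: "(\<lambda>y. (V y - F y) * g y) integrable_on {a..b}"
    proof -
      have "(\<lambda>y. V y * g y - F y * g y) integrable_on {a..b}" by (rule integrable_diff[OF Vgint Fint])
      then show ?thesis by (simp add: algebra_simps)
    qed
    have bU: "\<bar>ZU - ZF\<bar> \<le> \<eta> * c"
      unfolding dU by (rule intbound[OF _ iU]) (use gap sw in fastforce)
    have bV: "\<bar>ZV - ZF\<bar> \<le> \<eta> * c"
      unfolding dV by (rule intbound[OF _ iV]) (use gap sw in fastforce)
    have bb: "b \<in> {a..b}" using ab by simp
    have e1: "\<bar>(U b - F b) * G0 b\<bar> \<le> \<eta> * c"
      unfolding abs_mult using gap[OF bb] sw[OF bb] G0b[OF bb] \<eta> by (intro mult_mono) auto
    have e2: "\<bar>(V b - F b) * G0 b\<bar> \<le> \<eta> * c"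
      unfolding abs_mult using gap[OF bb] sw[OF bb] G0b[OF bb] \<eta> by (intro mult_mono) auto
    have e3: "c * (U b - V b) \<le> c * \<eta>" using gap[OF bb] c0 by (intro mult_left_mono) auto
    then have e3: "c * (U b - V b) \<le> \<eta> * c" by (simp add: mult.commute)
    have e4: "0 \<le> c * (U b - V b)" using gap[OF bb] c0 by simp
    have "W1 b - W1 a - T = (U b - F b) * G0 b + c * (U b - V b) - (ZU - ZF)"
      by (simp add: v1 T_def algebra_simps)
    then have r1: "W1 b - W1 a \<le> T + 3 * \<eta> * c" using e1 e3 bU unfolding abs_le_iff by linarith
    have "W2 b - W2 a - T = (V b - F b) * G0 b - c * (U b - V b) - (ZV - ZF)"
      by (simp add: v2 T_def algebra_simps)
    then have r2: "T - 3 * \<eta> * c \<le> W2 b - W2 a" using e2 e3 bV unfolding abs_le_iff by linarith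
    show ?thesis using W1maj W2min r1 r2 by blast
  qed
  have small: "\<exists>\<eta>>0. 3 * \<eta> * c < e" if e: "e > 0" for e
  proof (intro exI conjI)
    show "e / (3 * c + 1) > 0" using e c0 by simp
    have "3 * (e / (3 * c + 1)) * c = e * (3 * c / (3 * c + 1))" by simp
    also have "\<dots> < e * 1" using e c0 by (intro mult_strict_left_mono) auto
    finally show "3 * (e / (3 * c + 1)) * c < e" by simp
  qed
  have LI: "laplace_integrable \<phi> a b" "laplace_integral \<phi> a b = T"
  proof -
    have A: "T \<le> U b - U a" if U: "laplace_major \<phi> a b U" for U
    proof (rule field_le_epsilon)
      fix e :: real assume e: "e > 0"
      obtain \<eta> where \<eta>: "\<eta> > 0" "3 * \<eta> * c < e" using small[OF e] by blast
      obtain W1 W2 where W: "laplace_major \<phi> a b W1" "laplace_minor \<phi> a b W2"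
        "W1 b - W1 a \<le> T + 3 * \<eta> * c" "T - 3 * \<eta> * c \<le> W2 b - W2 a" using approx[OF \<eta>(1)] by blast
      have "W2 b - W2 a \<le> U b - U a"
        using lmaj_minor_mono[of \<phi> a b U W2 a b] U W(2) ab by (simp add: lmaj_iff[OF ab] lmin_iff[OF ab])
      then show "T \<le> U b - U a + e" using W(4) \<eta> by linarith
    qed
    have B: "V b - V a \<le> T" if V: "laplace_minor \<phi> a b V" for V
    proof (rule field_le_epsilon)
      fix e :: real assume e: "e > 0"
      obtain \<eta> where \<eta>: "\<eta> > 0" "3 * \<eta> * c < e" using small[OF e] by blast
      obtain W1 W2 where W: "laplace_major \<phi> a b W1" "laplace_minor \<phi> a b W2"
        "W1 b - W1 a \<le> T + 3 * \<eta> * c" "T - 3 * \<eta> * c \<le> W2 b - W2 a" using approx[OF \<eta>(1)] by blast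
      have "V b - V a \<le> W1 b - W1 a"
        using lmaj_minor_mono[of \<phi> a b W1 V a b] V W(1) ab by (simp add: lmaj_iff[OF ab] lmin_iff[OF ab])
      then show "V b - V a \<le> T + e" using W(3) \<eta> by linarith
    qed
    have A2: "\<exists>U. laplace_major \<phi> a b U \<and> U b - U a < T + e" if e: "e > 0" for e
    proof -
      obtain \<eta> where \<eta>: "\<eta> > 0" "3 * \<eta> * c < e" using small[OF e] by blast
      obtain W1 W2 where W: "laplace_major \<phi> a b W1" "laplace_minor \<phi> a b W2"
        "W1 b - W1 a \<le> T + 3 * \<eta> * c" "T - 3 * \<eta> * c \<le> W2 b - W2 a" using approx[OF \<eta>(1)] by blast
      have "W1 b - W1 a < T + e" using W(3) \<eta> by linarith
      then show ?thesis using W(1) by blast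
    qed
    have B2: "\<exists>V. laplace_minor \<phi> a b V \<and> T - e < V b - V a" if e: "e > 0" for e
    proof -
      obtain \<eta> where \<eta>: "\<eta> > 0" "3 * \<eta> * c < e" using small[OF e] by blast
      obtain W1 W2 where W: "laplace_major \<phi> a b W1" "laplace_minor \<phi> a b W2"
        "W1 b - W1 a \<le> T + 3 * \<eta> * c" "T - 3 * \<eta> * c \<le> W2 b - W2 a" using approx[OF \<eta>(1)] by blast
      have "T - e < W2 b - W2 a" using W(4) \<eta> by linarith
      then show ?thesis using W(2) by blast
    qed
    show "laplace_integrable \<phi> a b" "laplace_integral \<phi> a b = T"
      using laplace_integrable_intro[OF ab A B A2 B2] by auto
  qed
  have eqfun: "\<And>x. x \<in> {a..b} \<Longrightarrow> f x * G x = \<phi> x" by (simp add: \<phi>_def GG0)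
  have bb: "b \<in> {a..b}" using ab by simp
  show ?thesis
    using LI laplace_cong[of a b "\<lambda>x. f x * G x" \<phi>, OF eqfun] Fper Fpval GG0[OF bb]
    by (simp add: T_def ZF_def)
qed


end
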